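(* Let $G$ be a graph with edge set $E$, let $k\ge1$, and suppose $M_k(G)$ is a non-trivial matroid (so that $G$ has a component with at least two cycles and the core $[G]$ is defined). Let $t(H)$ be the number of tree components of a graph $H$ and $Y(G)=\{e\in E: t(G\setminus e)>t(G)\}$. Then the set of coloops of $M_k(G)$ equals $E\setminus E([G])$, and this set equals $Y(G)$.
   Context: Graphs are finite, may have loops and parallel edges, and have no isolated vertices; $G\setminus e$ deletes the edge $e$ and keeps all vertices (a single vertex counts as a tree component). A leaf is a vertex incident to exactly one edge, which is not a loop. $\Delta H=|E(H)|-|V(H)|$. For $X\subseteq E$, $G\langle X\rangle$ is the subgraph with edge set $X$ and vertex set the vertices incident to $X$. For $k\ge0$, $M_k(G)$ is the matroid on $E$ whose circuits are the inclusion-minimal members of $\{C\subseteq E:C\neq\emptyset,\ |C|=|V(G\langle C\rangle)|+k\}$. A matroid is non-trivial if it has at least one circuit and at least one cocircuit. A coloop is an element lying in no circuit. For a connected graph $A$ containing a cycle, its kernel $\lfloor A\rfloor$ is the subgraph obtained by repeatedly deleting leaves (with incident edges) until none remain; the core $[G]$ is the union of $\lfloor A\rfloor$ over components $A$ of $G$ with $\Delta A\ge1$. *)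

theory Defs
  imports Main
begin

text \<open>A (multi)graph is given by a finite edge set E and an incidence map
  ends :: 'e => 'v set; ends e has one element (a loop) or two elements.
  The vertex set is the set of vertices incident to edges (no isolated vertices).\<close>

definition multigraph :: "'e set \<Rightarrow> ('e \<Rightarrow> 'v set) \<Rightarrow> bool" where
  "multigraph E ends \<longleftrightarrow> finite E \<and>
     (\<forall>e\<in>E. finite (ends e) \<and> 1 \<le> card (ends e) \<and> card (ends e) \<le> 2)"

definition verts :: "('e \<Rightarrow> 'v set) \<Rightarrow> 'e set \<Rightarrow> 'v set" where
  "verts ends X = \<Union> (ends ` X)"

definition Mk_circuits :: "'e set \<Rightarrow> ('e \<Rightarrow> 'v set) \<Rightarrow> nat \<Rightarrow> 'e set set" where
  "Mk_circuits E ends k =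
     {C. C \<subseteq> E \<and> C \<noteq> {} \<and> card C = card (verts ends C) + k \<and>
         (\<forall>D. D \<subset> C \<longrightarrow> \<not> (D \<noteq> {} \<and> card D = card (verts ends D) + k))}"

definition indep_from_circuits :: "'e set \<Rightarrow> 'e set set \<Rightarrow> 'e set \<Rightarrow> bool" where
  "indep_from_circuits E \<C> I \<longleftrightarrow> I \<subseteq> E \<and> (\<forall>C\<in>\<C>. \<not> C \<subseteq> I)"

definition bases_from_circuits :: "'e set \<Rightarrow> 'e set set \<Rightarrow> 'e set set" where
  "bases_from_circuits E \<C> =
     {B. indep_from_circuits E \<C> B \<and> (\<forall>I. indep_from_circuits E \<C> I \<longrightarrow> B \<subseteq> I \<longrightarrow> I = B)}"

definition cocircuits_from_circuits :: "'e set \<Rightarrow> 'e set set \<Rightarrow> 'e set set" where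
  "cocircuits_from_circuits E \<C> =
     {D. D \<subseteq> E \<and> D \<noteq> {} \<and> (\<forall>B\<in>bases_from_circuits E \<C>. D \<inter> B \<noteq> {}) \<and>
         (\<forall>D'. D' \<subset> D \<longrightarrow> \<not> (D' \<noteq> {} \<and> (\<forall>B\<in>bases_from_circuits E \<C>. D' \<inter> B \<noteq> {})))}"

definition nontrivial_matroid :: "'e set \<Rightarrow> 'e set set \<Rightarrow> bool" where
  "nontrivial_matroid E \<C> \<longleftrightarrow> \<C> \<noteq> {} \<and> cocircuits_from_circuits E \<C> \<noteq> {}"

definition coloops :: "'e set \<Rightarrow> 'e set set \<Rightarrow> 'e set" where
  "coloops E \<C> = {e\<in>E. \<forall>C\<in>\<C>. e \<notin> C}"

definition adj :: "('e \<Rightarrow> 'v set) \<Rightarrow> 'e set \<Rightarrow> ('v \<times> 'v) set" where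
  "adj ends E = {(u,w). \<exists>e\<in>E. u \<in> ends e \<and> w \<in> ends e}"

definition comp_of :: "('e \<Rightarrow> 'v set) \<Rightarrow> 'v set \<Rightarrow> 'e set \<Rightarrow> 'v \<Rightarrow> 'v set" where
  "comp_of ends V E v = {w\<in>V. (v,w) \<in> (adj ends E)\<^sup>*}"

definition comps :: "('e \<Rightarrow> 'v set) \<Rightarrow> 'v set \<Rightarrow> 'e set \<Rightarrow> 'v set set" where
  "comps ends V E = comp_of ends V E ` V"

definition comp_edges :: "('e \<Rightarrow> 'v set) \<Rightarrow> 'e set \<Rightarrow> 'v set \<Rightarrow> 'e set" where
  "comp_edges ends E C = {e\<in>E. ends e \<subseteq> C}"

definition Delta_comp :: "('e \<Rightarrow> 'v set) \<Rightarrow> 'e set \<Rightarrow> 'v set \<Rightarrow> int" where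
  "Delta_comp ends E C = int (card (comp_edges ends E C)) - int (card C)"

text \<open>Number of tree components (connected with |E| = |V| - 1; single vertices count).\<close>
definition tree_count :: "('e \<Rightarrow> 'v set) \<Rightarrow> 'v set \<Rightarrow> 'e set \<Rightarrow> nat" where
  "tree_count ends V E = card {C \<in> comps ends V E. Delta_comp ends E C = -1}"

definition Yset :: "'e set \<Rightarrow> ('e \<Rightarrow> 'v set) \<Rightarrow> 'e set" where
  "Yset E ends = {e\<in>E. tree_count ends (verts ends E) (E - {e}) > tree_count ends (verts ends E) E}"

definition is_leaf :: "('e \<Rightarrow> 'v set) \<Rightarrow> 'v set \<Rightarrow> 'e set \<Rightarrow> 'v \<Rightarrow> 'e \<Rightarrow> bool" where
  "is_leaf ends V E v e \<longleftrightarrow> v \<in> V \<and> e \<in> E \<and> v \<in> ends e \<and> card (ends e) = 2 \<and>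
      (\<forall>f\<in>E. v \<in> ends f \<longrightarrow> f = e)"

definition leaf_step :: "('e \<Rightarrow> 'v set) \<Rightarrow> ('v set \<times> 'e set) \<Rightarrow> ('v set \<times> 'e set) \<Rightarrow> bool" where
  "leaf_step ends G H \<longleftrightarrow>
     (\<exists>v e. is_leaf ends (fst G) (snd G) v e \<and> H = (fst G - {v}, snd G - {e}))"

definition no_leaves :: "('e \<Rightarrow> 'v set) \<Rightarrow> ('v set \<times> 'e set) \<Rightarrow> bool" where
  "no_leaves ends H \<longleftrightarrow> (\<nexists>v e. is_leaf ends (fst H) (snd H) v e)"

definition kernel :: "('e \<Rightarrow> 'v set) \<Rightarrow> 'e set \<Rightarrow> 'v set \<Rightarrow> 'v set \<times> 'e set" where
  "kernel ends E C = (THE H. (leaf_step ends)\<^sup>*\<^sup>* (C, comp_edges ends E C) H \<and> no_leaves ends H)"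

definition core_edges :: "'e set \<Rightarrow> ('e \<Rightarrow> 'v set) \<Rightarrow> 'e set" where
  "core_edges E ends =
     (\<Union>C\<in>{C\<in>comps ends (verts ends E) E. Delta_comp ends E C \<ge> 1}. snd (kernel ends E C))"

end

theory Submission
  imports Defs
begin

definition dlt :: "('e \<Rightarrow> 'v set) \<Rightarrow> 'e set \<Rightarrow> int" where
  "dlt ends X = int (card X) - int (card (verts ends X))"

definition SC :: "('e \<Rightarrow> 'v set) \<Rightarrow> 'e set \<Rightarrow> bool" where
  "SC ends W \<longleftrightarrow> (\<forall>D. D \<subset> W \<longrightarrow> dlt ends D < dlt ends W)"

locale G =
  fixes E :: "'e set" and ends :: "'e \<Rightarrow> 'v set"
  assumes mg: "multigraph E ends"
begin

lemma finE: "finite E" using mg by (simp add: multigraph_def)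
lemma ends_fin: "f \<in> E \<Longrightarrow> finite (ends f)" using mg by (simp add: multigraph_def)
lemma ends_card: "f \<in> E \<Longrightarrow> 1 \<le> card (ends f) \<and> card (ends f) \<le> 2"
  using mg by (simp add: multigraph_def)
lemma ends_ne: "f \<in> E \<Longrightarrow> ends f \<noteq> {}"
  using ends_card by fastforce

lemma finX: "X \<subseteq> E \<Longrightarrow> finite X" using finE finite_subset by blast
lemma finV: "X \<subseteq> E \<Longrightarrow> finite (verts ends X)"
  unfolding verts_def using finX ends_fin by blast

lemma V_mono: "X \<subseteq> Y \<Longrightarrow> verts ends X \<subseteq> verts ends Y"
  unfolding verts_def by blast
lemma V_Un: "verts ends (X \<union> Y) = verts ends X \<union> verts ends Y"
  unfolding verts_def by blast
lemma V_insert: "verts ends (insert f X) = ends f \<union> verts ends X"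
  unfolding verts_def by blast
lemma V_empty[simp]: "verts ends {} = {}"
  unfolding verts_def by blast
lemma V_iff: "v \<in> verts ends X \<longleftrightarrow> (\<exists>f\<in>X. v \<in> ends f)"
  unfolding verts_def by blast

lemma dlt_empty[simp]: "dlt ends {} = 0" by (simp add: dlt_def)

lemma dlt_single: "f \<in> E \<Longrightarrow> dlt ends {f} = 1 - int (card (ends f))"
  by (simp add: dlt_def verts_def)

lemma dlt_single_bounds: "f \<in> E \<Longrightarrow> -1 \<le> dlt ends {f} \<and> dlt ends {f} \<le> 0"
  using dlt_single ends_card by force

lemma dlt_remove:
  assumes "X \<subseteq> E" "f \<in> X"
  shows "dlt ends (X - {f}) \<ge> dlt ends X - 1"
proof -
  have "card (verts ends (X - {f})) \<le> card (verts ends X)"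
    using assms finV V_mono[of "X - {f}" X] by (meson Diff_subset card_mono)
  moreover have "card (X - {f}) = card X - 1" using assms by simp
  moreover have "card X \<ge> 1" using assms finX
    by (metis One_nat_def Suc_leI card_gt_0_iff empty_iff)
  ultimately show ?thesis unfolding dlt_def by linarith
qed

lemma dlt_super:
  assumes "X \<subseteq> E" "Y \<subseteq> E"
  shows "dlt ends (X \<union> Y) + dlt ends (X \<inter> Y) \<ge> dlt ends X + dlt ends Y"
proof -
  have c1: "card (X \<union> Y) + card (X \<inter> Y) = card X + card Y"
    using card_Un_Int finX assms by (metis)
  have fv: "finite (verts ends X)" "finite (verts ends Y)" using finV assms by auto
  have c2: "card (verts ends X \<union> verts ends Y) + card (verts ends X \<inter> verts ends Y)
      = card (verts ends X) + card (verts ends Y)"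
    using card_Un_Int fv by metis
  have c3: "card (verts ends (X \<inter> Y)) \<le> card (verts ends X \<inter> verts ends Y)"
    apply (rule card_mono) using fv apply blast unfolding verts_def by blast
  have c1': "int (card (X \<union> Y)) + int (card (X \<inter> Y)) = int (card X) + int (card Y)"
    using c1 by linarith
  have c2': "int (card (verts ends X \<union> verts ends Y)) + int (card (verts ends X \<inter> verts ends Y))
      = int (card (verts ends X)) + int (card (verts ends Y))" using c2 by linarith
  show ?thesis using c1' c2' c3 unfolding dlt_def V_Un by linarith
qed

lemma dlt_add:
  assumes "X \<subseteq> E" "Y \<subseteq> E" "verts ends X \<inter> verts ends Y = {}"
  shows "dlt ends (X \<union> Y) = dlt ends X + dlt ends Y"
proof -
  have "X \<inter> Y = {}"
  proof (rule ccontr)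
    assume "X \<inter> Y \<noteq> {}"
    then obtain f where "f \<in> X" "f \<in> Y" by blast
    then obtain v where "v \<in> ends f" using ends_ne assms by blast
    then show False using assms \<open>f\<in>X\<close> \<open>f\<in>Y\<close> unfolding verts_def by blast
  qed
  then have c1: "card (X \<union> Y) = card X + card Y" using finX assms card_Un_disjoint by metis
  have c2: "card (verts ends X \<union> verts ends Y) = card (verts ends X) + card (verts ends Y)"
    using assms finV card_Un_disjoint by metis
  show ?thesis using c1 c2 V_Un unfolding dlt_def by simp
qed

lemma SC_mono_lt: "SC ends W \<Longrightarrow> D \<subset> W \<Longrightarrow> dlt ends D < dlt ends W"
  unfolding SC_def by blast

lemma ivt:
  assumes "D \<subseteq> E" "D \<noteq> {}" "dlt ends D \<ge> int k" "k \<ge> 1"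
  shows "\<exists>D'. D' \<subseteq> D \<and> D' \<noteq> {} \<and> dlt ends D' = int k"
  using assms
proof (induction "card D" arbitrary: D rule: less_induct)
  case less
  show ?case
  proof (cases "dlt ends D = int k")
    case True then show ?thesis using less by blast
  next
    case False
    obtain f where f: "f \<in> D" using less by blast
    have "D - {f} \<noteq> {}"
    proof
      assume "D - {f} = {}"
      then have "D = {f}" using f by blast
      then show False using dlt_single_bounds[of f] less f by force
    qed
    moreover have "dlt ends (D - {f}) \<ge> int k" using dlt_remove[of D f] less False f by linarith
    moreover have "card (D - {f}) < card D" using f finX less by (meson card_Diff1_less)
    ultimately obtain D' where "D' \<subseteq> D - {f}" "D' \<noteq> {}" "dlt ends D' = int k"
      using less by (meson Diff_subset order_trans)
    then show ?thesis by blast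
  qed
qed

lemma circuit_char:
  assumes "k \<ge> 1"
  shows "C \<in> Mk_circuits E ends k \<longleftrightarrow> C \<subseteq> E \<and> dlt ends C = int k \<and> SC ends C"
proof
  assume C: "C \<in> Mk_circuits E ends k"
  then have CE: "C \<subseteq> E" and Cne: "C \<noteq> {}" and cc: "card C = card (verts ends C) + k"
    and mn: "\<forall>D. D \<subset> C \<longrightarrow> \<not> (D \<noteq> {} \<and> card D = card (verts ends D) + k)"
    unfolding Mk_circuits_def by auto
  have dC: "dlt ends C = int k" using cc by (simp add: dlt_def)
  have "SC ends C"
    unfolding SC_def
  proof (intro allI impI)
    fix D assume D: "D \<subset> C"
    show "dlt ends D < dlt ends C"
    proof (rule ccontr)
      assume "\<not> dlt ends D < dlt ends C"
      then have ge: "dlt ends D \<ge> int k" using dC by simp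
      have "D \<noteq> {}" using ge assms by auto
      then obtain D' where "D' \<subseteq> D" "D' \<noteq> {}" "dlt ends D' = int k"
        using ivt[of D k] ge assms D CE by auto
      then have "D' \<subset> C" "card D' = card (verts ends D') + k" using D by (auto simp: dlt_def)
      then show False using mn \<open>D' \<noteq> {}\<close> by blast
    qed
  qed
  then show "C \<subseteq> E \<and> dlt ends C = int k \<and> SC ends C" using CE dC by blast
next
  assume A: "C \<subseteq> E \<and> dlt ends C = int k \<and> SC ends C"
  then have "C \<noteq> {}" using assms by auto
  moreover have "card C = card (verts ends C) + k" using A by (simp add: dlt_def)
  moreover have "\<forall>D. D \<subset> C \<longrightarrow> \<not> (D \<noteq> {} \<and> card D = card (verts ends D) + k)"
  proof (intro allI impI notI)
    fix D assume "D \<subset> C" "D \<noteq> {} \<and> card D = card (verts ends D) + k"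
    then have "dlt ends D = dlt ends C" using A by (simp add: dlt_def)
    then show False using A \<open>D \<subset> C\<close> SC_mono_lt by (metis less_irrefl)
  qed
  ultimately show "C \<in> Mk_circuits E ends k" using A unfolding Mk_circuits_def by blast
qed

end


context G
begin

lemma up:
  assumes WK: "W \<subseteq> K" and KE: "K \<subseteq> E" and SCW: "SC ends W"
    and dW: "dlt ends W \<le> int k" and dK: "dlt ends K \<ge> int k"
  shows "\<exists>X. W \<subseteq> X \<and> X \<subseteq> K \<and> SC ends X \<and> dlt ends X = int k"
proof (cases "dlt ends W = int k")
  case True then show ?thesis using WK SCW by blast
next
  case False
  define P where "P = (\<lambda>Y. W \<subseteq> Y \<and> Y \<subseteq> K \<and> dlt ends Y \<ge> int k)"
  have "P K" using WK dK by (simp add: P_def)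
  then obtain X where PX: "P X" and minX: "\<And>Y. P Y \<Longrightarrow> card X \<le> card Y"
    using ex_has_least_nat[of P K card] by blast
  have XE: "X \<subseteq> E" using PX KE by (auto simp: P_def)
  have "X \<noteq> W" using PX False dW by (auto simp: P_def)
  then obtain f where f: "f \<in> X" "f \<notin> W" using PX by (auto simp: P_def)
  have dX: "dlt ends X = int k"
  proof (rule ccontr)
    assume "dlt ends X \<noteq> int k"
    then have "dlt ends X > int k" using PX by (auto simp: P_def)
    then have "P (X - {f})" using PX f dlt_remove[OF XE f(1)] unfolding P_def by auto
    moreover have "card (X - {f}) < card X" using f finX XE by (meson card_Diff1_less)
    ultimately show False using minX[of "X - {f}"] by linarith
  qed
  have "SC ends X"
    unfolding SC_def
  proof (intro allI impI)
    fix D assume D: "D \<subset> X"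
    have DE: "D \<subseteq> E" "W \<subseteq> E" using D XE PX by (auto simp: P_def)
    have sup: "dlt ends (D \<union> W) + dlt ends (D \<inter> W) \<ge> dlt ends D + dlt ends W"
      using dlt_super DE by blast
    show "dlt ends D < dlt ends X"
    proof (cases "D \<union> W = X")
      case True
      have "D \<inter> W \<subset> W" using True D by blast
      then have "dlt ends (D \<inter> W) < dlt ends W" using SCW SC_mono_lt by blast
      moreover have "dlt ends (D \<union> W) = dlt ends X" using True by simp
      ultimately show ?thesis using sup by linarith
    next
      case False
      then have "D \<union> W \<subset> X" using D PX by (auto simp: P_def)
      then have "card (D \<union> W) < card X" using XE finX psubset_card_mono by blast
      then have "\<not> P (D \<union> W)" using minX[of "D \<union> W"] by linarith
      then have "dlt ends (D \<union> W) < int k" using PX D by (auto simp: P_def)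
      moreover have "dlt ends (D \<inter> W) \<le> dlt ends W"
      proof (cases "D \<inter> W = W")
        case True then show ?thesis by simp
      next
        case False then have "D \<inter> W \<subset> W" by blast
        then show ?thesis using SCW SC_mono_lt[of W "D \<inter> W"] by linarith
      qed
      ultimately show ?thesis using sup dX by linarith
    qed
  qed
  then show ?thesis using PX dX by (auto simp: P_def)
qed

lemma down_step:
  assumes WE: "W \<subseteq> E" and SCW: "SC ends W" and e: "e \<in> W" and j2: "dlt ends W \<ge> 2"
  shows "\<exists>W'. W' \<subseteq> W \<and> SC ends W' \<and> e \<in> W' \<and> dlt ends W' = dlt ends W - 1"
proof -
  define j where "j = dlt ends W"
  have sub: "\<And>D. D \<subset> W \<Longrightarrow> dlt ends D \<le> j - 1"
  proof -
    fix D assume "D \<subset> W" then show "dlt ends D \<le> j - 1" using SCW SC_mono_lt[of W D] j_def by linarith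
  qed
  define PN where "PN = (\<lambda>N. N \<subseteq> W - {e} \<and> dlt ends N \<ge> j - 1)"
  have "PN (W - {e})" using dlt_remove[OF WE e] by (simp add: PN_def j_def)
  then obtain N where PNN: "PN N" and minN: "\<And>Y. PN Y \<Longrightarrow> card N \<le> card Y"
    using ex_has_least_nat[of PN "W - {e}" card] by blast
  have "N \<noteq> {}" using PNN j2 by (auto simp: PN_def j_def)
  then obtain f where fN: "f \<in> N" by blast
  then have fW: "f \<in> W" and fe: "f \<noteq> e" using PNN by (auto simp: PN_def)
  define PM where "PM = (\<lambda>M. M \<subseteq> W - {f} \<and> dlt ends M \<ge> j - 1)"
  have "PM (W - {f})" using dlt_remove[OF WE fW] by (simp add: PM_def j_def)
  then obtain M where PMM: "PM M" and minM: "\<And>Y. PM Y \<Longrightarrow> card M \<le> card Y"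
    using ex_has_least_nat[of PM "W - {f}" card] by blast
  have MW: "M \<subset> W" using PMM fW by (auto simp: PM_def)
  have ME: "M \<subseteq> E" using MW WE by blast
  have dM: "dlt ends M = j - 1" using sub[OF MW] PMM by (auto simp: PM_def)
  have SCM: "SC ends M"
    unfolding SC_def
  proof (intro allI impI)
    fix D assume D: "D \<subset> M"
    then have "card D < card M" using ME finX psubset_card_mono by blast
    then have "\<not> PM D" using minM[of D] by linarith
    then show "dlt ends D < dlt ends M" using D PMM dM by (auto simp: PM_def)
  qed
  have "e \<in> M"
  proof (rule ccontr)
    assume eM: "e \<notin> M"
    have NE: "N \<subseteq> E" using PNN WE by (auto simp: PN_def)
    have "M \<union> N \<subset> W" using eM PNN PMM e by (auto simp: PN_def PM_def)
    then have "dlt ends (M \<union> N) \<le> j - 1" using sub by blast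
    then have "dlt ends (M \<inter> N) \<ge> j - 1"
      using dlt_super[OF ME NE] dM PNN by (auto simp: PN_def)
    then have "PN (M \<inter> N)" using PNN by (auto simp: PN_def)
    moreover have "card (M \<inter> N) < card N"
      using fN PMM NE finX by (intro psubset_card_mono) (auto simp: PM_def)
    ultimately show False using minN[of "M \<inter> N"] by linarith
  qed
  then show ?thesis using MW SCM dM j_def by blast
qed

lemma down:
  assumes "W \<subseteq> E" "SC ends W" "e \<in> W" "1 \<le> k" "int k \<le> dlt ends W"
  shows "\<exists>W'. W' \<subseteq> W \<and> SC ends W' \<and> e \<in> W' \<and> dlt ends W' = int k"
  using assms
proof (induction "nat (dlt ends W - int k)" arbitrary: W)
  case 0
  then have "dlt ends W = int k" by linarith
  then show ?case using 0 by blast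
next
  case (Suc n W)
  then have "dlt ends W \<ge> 2" by linarith
  then obtain W1 where W1: "W1 \<subseteq> W" "SC ends W1" "e \<in> W1" "dlt ends W1 = dlt ends W - 1"
    using down_step[of W e] Suc.prems by blast
  have n: "n = nat (dlt ends W1 - int k)" using Suc.hyps(2) W1(4) by linarith
  have W1E: "W1 \<subseteq> E" using W1(1) Suc.prems(1) by (rule order_trans)
  have kW1: "int k \<le> dlt ends W1" using Suc.hyps(2) W1(4) by linarith
  obtain W' where W': "W' \<subseteq> W1" "SC ends W'" "e \<in> W'" "dlt ends W' = int k"
    using Suc.hyps(1)[OF n W1E W1(2) W1(3) Suc.prems(4) kW1] by blast
  have "W' \<subseteq> W" using W'(1) W1(1) by (rule order_trans)
  then show ?case using W'(2-4) by blast
qed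

end


definition conn :: "('e \<Rightarrow> 'v set) \<Rightarrow> 'e set \<Rightarrow> bool" where
  "conn ends Y \<longleftrightarrow> (\<forall>D. D \<noteq> {} \<longrightarrow> D \<subset> Y \<longrightarrow> (\<exists>f\<in>Y - D. ends f \<inter> verts ends D \<noteq> {}))"

context G
begin

lemma connD: "conn ends Y \<Longrightarrow> D \<noteq> {} \<Longrightarrow> D \<subset> Y \<Longrightarrow> \<exists>f\<in>Y - D. ends f \<inter> verts ends D \<noteq> {}"
  unfolding conn_def by blast

lemma is_leafD: "is_leaf ends V Y u f \<Longrightarrow> u \<in> V \<and> f \<in> Y \<and> u \<in> ends f \<and> card (ends f) = 2 \<and> (\<forall>g\<in>Y. u \<in> ends g \<longrightarrow> g = f)"
  unfolding is_leaf_def by blast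

lemma card_ends_minus:
  assumes "f \<in> E" "x \<in> ends f" "x \<in> S"
  shows "card (ends f - S) \<le> 1"
proof -
  have "ends f - S \<subseteq> ends f - {x}" using assms by blast
  then have "card (ends f - S) \<le> card (ends f - {x})"
    using ends_fin[OF assms(1)] by (meson card_mono finite_Diff)
  also have "\<dots> = card (ends f) - 1" using assms by simp
  finally show ?thesis using ends_card[OF assms(1)] by linarith
qed

lemma grow:
  assumes "conn ends Y" "Y \<subseteq> E" "D \<subseteq> Y" "D \<noteq> {}"
  shows "card (verts ends Y - verts ends D) \<le> card (Y - D) \<and>
    ((D \<noteq> Y \<and> (\<forall>u f. is_leaf ends (verts ends Y) Y u f \<longrightarrow> u \<in> verts ends D))
      \<longrightarrow> card (verts ends Y - verts ends D) < card (Y - D))"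
  using assms
proof (induction "card (Y - D)" arbitrary: D rule: less_induct)
  case less
  show ?case
  proof (cases "D = Y")
    case True then show ?thesis by simp
  next
    case False
    then have DY: "D \<subset> Y" using less by blast
    then obtain f where f: "f \<in> Y - D" "ends f \<inter> verts ends D \<noteq> {}"
      using connD[OF less(2) less(5) DY] by blast
    then obtain x where x: "x \<in> ends f" "x \<in> verts ends D" by blast
    have fE: "f \<in> E" using f less by blast
    define D' where "D' = insert f D"
    have finY: "finite Y" using less finX by blast
    have cYD: "card (Y - D) = card (Y - D') + 1"
    proof -
      have "Y - D = insert f (Y - D')" using f by (auto simp: D'_def)
      moreover have "f \<notin> Y - D'" by (simp add: D'_def)
      ultimately show ?thesis using finY by simp
    qed
    have lt: "card (Y - D') < card (Y - D)" using cYD by simp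
    have VD': "verts ends D' = ends f \<union> verts ends D" by (simp add: D'_def V_insert)
    have sub: "verts ends Y - verts ends D \<subseteq> (verts ends Y - verts ends D') \<union> (ends f - verts ends D)"
      using VD' by blast
    have fV: "finite (verts ends Y)" using finV less by blast
    have cV: "card (verts ends Y - verts ends D) \<le> card (verts ends Y - verts ends D') + card (ends f - verts ends D)"
    proof -
      have "card (verts ends Y - verts ends D) \<le> card ((verts ends Y - verts ends D') \<union> (ends f - verts ends D))"
        using sub fV ends_fin[OF fE] by (intro card_mono) auto
      also have "\<dots> \<le> card (verts ends Y - verts ends D') + card (ends f - verts ends D)"
        by (rule card_Un_le)
      finally show ?thesis .
    qed
    have c1: "card (ends f - verts ends D) \<le> 1" using card_ends_minus[OF fE x] .
    have D'Y: "D' \<subseteq> Y" "D' \<noteq> {}" using f less by (auto simp: D'_def)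
    have IH: "card (verts ends Y - verts ends D') \<le> card (Y - D') \<and>
      ((D' \<noteq> Y \<and> (\<forall>u f. is_leaf ends (verts ends Y) Y u f \<longrightarrow> u \<in> verts ends D'))
        \<longrightarrow> card (verts ends Y - verts ends D') < card (Y - D'))"
      using less(1)[OF lt less(2) less(3) D'Y] .
    have part1: "card (verts ends Y - verts ends D) \<le> card (Y - D)"
      using IH cV c1 cYD by linarith
    have part2: "card (verts ends Y - verts ends D) < card (Y - D)"
      if lv: "\<forall>u f. is_leaf ends (verts ends Y) Y u f \<longrightarrow> u \<in> verts ends D"
    proof (cases "D' = Y")
      case True
      have "ends f \<subseteq> verts ends D"
      proof
        fix u assume u: "u \<in> ends f"
        show "u \<in> verts ends D"
        proof (rule ccontr)
          assume uD: "u \<notin> verts ends D"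
          have "x \<noteq> u" using x uD by blast
          then have "card {x, u} = 2" by simp
          moreover have "{x, u} \<subseteq> ends f" using x u by blast
          ultimately have "card (ends f) \<ge> 2" using ends_fin[OF fE] by (metis card_mono)
          then have c2: "card (ends f) = 2" using ends_card[OF fE] by linarith
          have "is_leaf ends (verts ends Y) Y u f"
            unfolding is_leaf_def
          proof (intro conjI)
            show "u \<in> verts ends Y" using u f unfolding verts_def by blast
            show "f \<in> Y" using f by blast
            show "u \<in> ends f" by fact
            show "card (ends f) = 2" by fact
            show "\<forall>g\<in>Y. u \<in> ends g \<longrightarrow> g = f"
            proof (intro ballI impI)
              fix g assume "g \<in> Y" "u \<in> ends g"
              then show "g = f" using True uD unfolding D'_def verts_def by blast
            qed
          qed
          then show False using lv uD by blast
        qed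
      qed
      then have "verts ends Y - verts ends D = {}"
        using True VD' by blast
      then have "card (verts ends Y - verts ends D) = 0" by (simp only: card.empty)
      then show ?thesis using cYD by linarith
    next
      case False
      have "\<forall>u f. is_leaf ends (verts ends Y) Y u f \<longrightarrow> u \<in> verts ends D'"
        using lv VD' by blast
      then have "card (verts ends Y - verts ends D') < card (Y - D')" using IH False by blast
      then show ?thesis using cV c1 cYD by linarith
    qed
    show ?thesis using part1 part2 by blast
  qed
qed

lemma card_split:
  assumes "D \<subseteq> Y" "Y \<subseteq> E"
  shows "card Y = card D + card (Y - D)"
    "card (verts ends Y) = card (verts ends D) + card (verts ends Y - verts ends D)"
proof -
  have fY: "finite Y" using assms finX by blast
  then have fD: "finite D" using assms finite_subset by blast
  have "card (Y - D) = card Y - card D" using card_Diff_subset[OF fD assms(1)] .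
  moreover have "card D \<le> card Y" using card_mono[OF fY assms(1)] .
  ultimately show "card Y = card D + card (Y - D)" by linarith
  have sV: "verts ends D \<subseteq> verts ends Y" using assms V_mono by blast
  have fVY: "finite (verts ends Y)" using finV[OF assms(2)] .
  then have fVD: "finite (verts ends D)" using sV finite_subset by blast
  have "card (verts ends Y - verts ends D) = card (verts ends Y) - card (verts ends D)"
    using card_Diff_subset[OF fVD sV] .
  moreover have "card (verts ends D) \<le> card (verts ends Y)" using card_mono[OF fVY sV] .
  ultimately show "card (verts ends Y) = card (verts ends D) + card (verts ends Y - verts ends D)" by linarith
qed

lemma dlt_le_conn:
  assumes "conn ends Y" "Y \<subseteq> E" "D \<subseteq> Y" "D \<noteq> {}"
  shows "dlt ends D \<le> dlt ends Y"
  using grow[OF assms] card_split[OF assms(3,2)] unfolding dlt_def by linarith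

lemma dlt_lt_conn:
  assumes "conn ends Y" "Y \<subseteq> E" "D \<subseteq> Y" "D \<noteq> {}" "D \<noteq> Y"
    "\<forall>u f. is_leaf ends (verts ends Y) Y u f \<longrightarrow> u \<in> verts ends D"
  shows "dlt ends D < dlt ends Y"
proof -
  have "card (verts ends Y - verts ends D) < card (Y - D)" using grow[OF assms(1-4)] assms(5,6) by blast
  then show ?thesis using card_split[OF assms(3,2)] unfolding dlt_def by linarith
qed

lemma leaf_remove:
  assumes c: "conn ends Y" and YE: "Y \<subseteq> E" and lf: "is_leaf ends (verts ends Y) Y u f"
    and ne: "Y - {f} \<noteq> {}"
  shows "conn ends (Y - {f})" "verts ends (Y - {f}) = verts ends Y - {u}"
proof -
  have fY: "f \<in> Y" and uf: "u \<in> ends f" and c2: "card (ends f) = 2"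
    and only: "\<forall>g\<in>Y. u \<in> ends g \<longrightarrow> g = f"
    using is_leafD[OF lf] by auto
  have uV: "u \<notin> verts ends (Y - {f})" using only unfolding verts_def by blast
  have "Y - {f} \<subset> Y" using fY by blast
  then obtain g where g: "g \<in> Y - (Y - {f})" "ends g \<inter> verts ends (Y - {f}) \<noteq> {}"
    using connD[OF c ne] by blast
  have fmeet: "ends f \<inter> verts ends (Y - {f}) \<noteq> {}" using g by blast
  show "verts ends (Y - {f}) = verts ends Y - {u}"
  proof
    show "verts ends (Y - {f}) \<subseteq> verts ends Y - {u}" using uV V_mono[of "Y - {f}" Y] by blast
    show "verts ends Y - {u} \<subseteq> verts ends (Y - {f})"
    proof
      fix x assume x: "x \<in> verts ends Y - {u}"
      then obtain h where h: "h \<in> Y" "x \<in> ends h" unfolding verts_def by blast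
      show "x \<in> verts ends (Y - {f})"
      proof (cases "h = f")
        case False then show ?thesis using h unfolding verts_def by blast
      next
        case True
        obtain y where y: "y \<in> ends f" "y \<in> verts ends (Y - {f})" using fmeet by blast
        have "y \<noteq> u" using y uV by blast
        have fin: "finite (ends f)" using ends_fin fY YE by blast
        have "x \<noteq> u" using x by blast
        have "x = y"
        proof (rule ccontr)
          assume "x \<noteq> y"
          then have "{x, y, u} \<subseteq> ends f" using h True y uf by blast
          moreover have "card {x, y, u} = 3" using \<open>x \<noteq> y\<close> \<open>y \<noteq> u\<close> \<open>x \<noteq> u\<close> by simp
          ultimately have "card (ends f) \<ge> 3" using fin by (metis card_mono)
          then show False using c2 by simp
        qed
        then show ?thesis using y by blast
      qed
    qed
  qed
  show "conn ends (Y - {f})"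
    unfolding conn_def
  proof (intro allI impI)
    fix D assume D: "D \<noteq> {}" "D \<subset> Y - {f}"
    have DY: "D \<subset> Y" using D(2) by blast
    obtain h where h: "h \<in> Y - D" "ends h \<inter> verts ends D \<noteq> {}"
      using connD[OF c D(1) DY] by blast
    show "\<exists>h\<in>Y - {f} - D. ends h \<inter> verts ends D \<noteq> {}"
    proof (cases "h = f")
      case False then show ?thesis using h by blast
    next
      case True
      have Dsub: "D \<subseteq> Y - {f}" using D(2) by blast
      have "\<forall>g\<in>D. u \<notin> ends g" using only Dsub by blast
      then have uD: "u \<notin> verts ends D" unfolding verts_def by blast
      obtain z where z: "z \<in> Y - {f}" "z \<notin> D" using D(2) by blast
      have iY: "insert f D \<subset> Y"
      proof (rule psubsetI)
        show "insert f D \<subseteq> Y" using fY Dsub by blast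
        show "insert f D \<noteq> Y" using z by blast
      qed
      have ine: "insert f D \<noteq> {}" by blast
      obtain h' where h': "h' \<in> Y - insert f D" "ends h' \<inter> verts ends (insert f D) \<noteq> {}"
        using connD[OF c ine iY] by blast
      have h'Y: "h' \<in> Y" "h' \<noteq> f" using h'(1) by auto
      have uh': "u \<notin> ends h'" using only h'Y by blast
      obtain y where y: "y \<in> ends f" "y \<in> verts ends D" using h True by blast
      have yu: "y \<noteq> u" using y uD by blast
      have finf: "finite (ends f)" using ends_fin fY YE by blast
      have fuy: "ends f \<subseteq> {u, y}"
      proof
        fix w assume w: "w \<in> ends f"
        show "w \<in> {u, y}"
        proof (rule ccontr)
          assume wn: "w \<notin> {u, y}"
          then have "w \<noteq> u" "w \<noteq> y" by auto
          then have "card {w, y, u} = 3" using yu by simp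
          moreover have "{w, y, u} \<subseteq> ends f" using w y uf by blast
          ultimately have "card (ends f) \<ge> 3" using finf by (metis card_mono)
          then show False using c2 by simp
        qed
      qed
      obtain w where w: "w \<in> ends h'" "w \<in> verts ends (insert f D)" using h'(2) by blast
      have "w \<in> verts ends D"
      proof -
        have "w \<in> ends f \<or> w \<in> verts ends D" using w(2) by (simp add: V_insert)
        then show ?thesis
        proof
          assume "w \<in> ends f"
          then have "w = u \<or> w = y" using fuy by blast
          then show ?thesis using w(1) uh' y(2) by blast
        qed
      qed
      then have "ends h' \<inter> verts ends D \<noteq> {}" using w(1) by blast
      moreover have "h' \<in> Y - {f} - D" using h'(1) by blast
      ultimately show ?thesis by blast
    qed
  qed
qed

lemma LE:
  assumes "conn ends Y" "Y \<subseteq> E" "N \<subseteq> Y" "N \<noteq> {}" "dlt ends N \<ge> dlt ends Y" "Z \<subseteq> Y"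
    "\<forall>u g. is_leaf ends (verts ends Z) Z u g \<longrightarrow> u \<in> verts ends N"
  shows "Z \<subseteq> N"
  using assms
proof (induction "card (Y - N)" arbitrary: Y rule: less_induct)
  case less
  show ?case
  proof (cases "N = Y")
    case True then show ?thesis using less by blast
  next
    case False
    have "\<not> (\<forall>u f. is_leaf ends (verts ends Y) Y u f \<longrightarrow> u \<in> verts ends N)"
    proof
      assume "\<forall>u f. is_leaf ends (verts ends Y) Y u f \<longrightarrow> u \<in> verts ends N"
      then have "dlt ends N < dlt ends Y" using dlt_lt_conn[OF less(2-5) False] by blast
      then show False using less(6) by linarith
    qed
    then obtain u f where lf: "is_leaf ends (verts ends Y) Y u f" and uN: "u \<notin> verts ends N" by blast
    have fY: "f \<in> Y" and uf: "u \<in> ends f" and c2: "card (ends f) = 2"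
      and only: "\<forall>g\<in>Y. u \<in> ends g \<longrightarrow> g = f"
      using is_leafD[OF lf] by auto
    have fN: "f \<notin> N" using uN uf unfolding verts_def by blast
    have ne: "Y - {f} \<noteq> {}" using less(4,5) fN by blast
    note lr = leaf_remove[OF less(2,3) lf ne]
    have YE': "Y - {f} \<subseteq> E" using less by blast
    have NY': "N \<subseteq> Y - {f}" using fN less by blast
    have uY: "u \<in> verts ends Y" using is_leafD[OF lf] by blast
    have "dlt ends (Y - {f}) = dlt ends Y"
    proof -
      have "card (Y - {f}) = card Y - 1" using fY by simp
      moreover have "card (verts ends (Y - {f})) = card (verts ends Y) - 1" using lr(2) uY by simp
      moreover have "card Y \<ge> 1" using fY finX less(3) by (metis One_nat_def Suc_leI card_gt_0_iff empty_iff)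
      moreover have "card (verts ends Y) \<ge> 1" using uY finV less(3) by (metis One_nat_def Suc_leI card_gt_0_iff empty_iff)
      ultimately show ?thesis unfolding dlt_def by linarith
    qed
    then have dN: "dlt ends N \<ge> dlt ends (Y - {f})" using less by linarith
    have fZ: "f \<notin> Z"
    proof
      assume fZ: "f \<in> Z"
      have "is_leaf ends (verts ends Z) Z u f"
      proof -
        have "u \<in> verts ends Z" using fZ uf unfolding verts_def by blast
        moreover have "\<forall>g\<in>Z. u \<in> ends g \<longrightarrow> g = f" using only less(7) by blast
        ultimately show ?thesis unfolding is_leaf_def using fZ uf c2 by blast
      qed
      then show False using less(8) uN by blast
    qed
    have ZY': "Z \<subseteq> Y - {f}" using fZ less by blast
    have lt: "card (Y - {f} - N) < card (Y - N)"
    proof -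
      have "Y - N = insert f (Y - {f} - N)" using fY fN by blast
      moreover have "finite (Y - {f} - N)" using finX less(3) by blast
      moreover have "f \<notin> Y - {f} - N" by blast
      ultimately show ?thesis by simp
    qed
    show ?thesis using less(1)[OF lt lr(1) YE' NY' less(5) dN ZY' less(8)] .
  qed
qed

end


context G
begin

abbreviation "Vt \<equiv> verts ends E"

lemma adj_sym: "(u, w) \<in> adj ends F \<Longrightarrow> (w, u) \<in> adj ends F"
  unfolding adj_def by blast

lemma adjD: "(u, w) \<in> adj ends F \<Longrightarrow> \<exists>g\<in>F. u \<in> ends g \<and> w \<in> ends g"
  unfolding adj_def by blast

lemma adjI: "g \<in> F \<Longrightarrow> u \<in> ends g \<Longrightarrow> w \<in> ends g \<Longrightarrow> (u, w) \<in> adj ends F"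
  unfolding adj_def by blast

lemma adj_mono: "F \<subseteq> F' \<Longrightarrow> adj ends F \<subseteq> adj ends F'"
  unfolding adj_def by blast

lemma rtr_sym: "(u, w) \<in> (adj ends F)\<^sup>* \<Longrightarrow> (w, u) \<in> (adj ends F)\<^sup>*"
proof (induction rule: rtrancl_induct)
  case base then show ?case by simp
next
  case (step y z)
  have "(z, y) \<in> adj ends F" using adj_sym[OF step(2)] .
  then show ?case using step(3) by (rule converse_rtrancl_into_rtrancl)
qed

lemma rtr_Vt:
  assumes FE: "F \<subseteq> E" and r: "(u, w) \<in> (adj ends F)\<^sup>*" and u: "u \<in> Vt"
  shows "w \<in> Vt"
  using r
proof (induction rule: rtrancl_induct)
  case base then show ?case using u by simp
next
  case (step y z)
  obtain g where "g \<in> F" "z \<in> ends g" using adjD[OF step(2)] by blast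
  then show ?case using FE unfolding verts_def by blast
qed

lemma comp_of_iff: "w \<in> comp_of ends Vt F x \<longleftrightarrow> w \<in> Vt \<and> (x, w) \<in> (adj ends F)\<^sup>*"
  unfolding comp_of_def by blast

lemma comp_self: "x \<in> Vt \<Longrightarrow> x \<in> comp_of ends Vt F x"
  unfolding comp_of_def by blast

lemma comp_eq:
  assumes "y \<in> comp_of ends Vt F x"
  shows "comp_of ends Vt F y = comp_of ends Vt F x"
proof -
  have xy: "(x, y) \<in> (adj ends F)\<^sup>*" using assms comp_of_iff by blast
  have yx: "(y, x) \<in> (adj ends F)\<^sup>*" using rtr_sym[OF xy] .
  show ?thesis
  proof (intro set_eqI iffI)
    fix w assume "w \<in> comp_of ends Vt F y"
    then have "w \<in> Vt" "(y, w) \<in> (adj ends F)\<^sup>*" using comp_of_iff by blast+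
    then show "w \<in> comp_of ends Vt F x" using xy comp_of_iff rtrancl_trans by metis
  next
    fix w assume "w \<in> comp_of ends Vt F x"
    then have "w \<in> Vt" "(x, w) \<in> (adj ends F)\<^sup>*" using comp_of_iff by blast+
    then show "w \<in> comp_of ends Vt F y" using yx comp_of_iff rtrancl_trans by metis
  qed
qed

lemma compsE:
  assumes "C \<in> comps ends Vt F"
  obtains x where "x \<in> Vt" "C = comp_of ends Vt F x"
  using assms unfolding comps_def by blast

lemma comps_I: "x \<in> Vt \<Longrightarrow> comp_of ends Vt F x \<in> comps ends Vt F"
  unfolding comps_def by blast

lemma comp_sub: "C \<in> comps ends Vt F \<Longrightarrow> C \<subseteq> Vt"
  unfolding comps_def comp_of_def by blast

lemma comp_of_mem: "C \<in> comps ends Vt F \<Longrightarrow> y \<in> C \<Longrightarrow> C = comp_of ends Vt F y"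
  by (metis comp_eq compsE)

lemma comps_disj:
  assumes "C1 \<in> comps ends Vt F" "C2 \<in> comps ends Vt F" "y \<in> C1" "y \<in> C2"
  shows "C1 = C2"
  using comp_of_mem[OF assms(1,3)] comp_of_mem[OF assms(2,4)] by simp

lemma comps_fin: "finite (comps ends Vt F)"
  unfolding comps_def using finV[of E] by blast

lemma edge_in_comp:
  assumes FE: "F \<subseteq> E" and g: "g \<in> F" and v: "v \<in> ends g" "v \<in> C" and C: "C \<in> comps ends Vt F"
  shows "ends g \<subseteq> C"
proof
  fix w assume w: "w \<in> ends g"
  have CC: "C = comp_of ends Vt F v" using comp_of_mem[OF C v(2)] .
  have "(v, w) \<in> adj ends F" using adjI[OF g v(1) w] .
  moreover have "w \<in> Vt" using g FE w unfolding verts_def by blast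
  ultimately have "w \<in> comp_of ends Vt F v" unfolding comp_of_def by blast
  then show "w \<in> C" using CC by simp
qed

lemma comp_edges_sub: "comp_edges ends F C \<subseteq> F"
  unfolding comp_edges_def by blast

lemma verts_comp_edges: "verts ends (comp_edges ends F C) \<subseteq> C"
  unfolding comp_edges_def verts_def by blast

lemma conn_comp:
  assumes FE: "F \<subseteq> E" and C: "C \<in> comps ends Vt F"
  shows "conn ends (comp_edges ends F C)"
  unfolding conn_def
proof (intro allI impI)
  let ?EC = "comp_edges ends F C"
  fix D assume Dne: "D \<noteq> {}" and DC: "D \<subset> ?EC"
  show "\<exists>f\<in>?EC - D. ends f \<inter> verts ends D \<noteq> {}"
  proof (rule ccontr)
    assume no: "\<not> (\<exists>f\<in>?EC - D. ends f \<inter> verts ends D \<noteq> {})"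
    obtain f0 where f0: "f0 \<in> ?EC" "f0 \<notin> D" using DC by blast
    have f0E: "f0 \<in> E" using f0 FE comp_edges_sub by blast
    obtain u where u: "u \<in> ends f0" using ends_ne[OF f0E] by blast
    obtain d0 where d0: "d0 \<in> D" using Dne by blast
    have d0E: "d0 \<in> E" using d0 DC FE comp_edges_sub by blast
    obtain d where d: "d \<in> ends d0" using ends_ne[OF d0E] by blast
    have dVD: "d \<in> verts ends D" using d d0 unfolding verts_def by blast
    have uC: "u \<in> C" using u f0 unfolding comp_edges_def by blast
    have dC: "d \<in> C" using d d0 DC unfolding comp_edges_def by blast
    have "C = comp_of ends Vt F d" using comp_of_mem[OF C dC] .
    then have du: "(d, u) \<in> (adj ends F)\<^sup>*" using uC comp_of_iff by blast
    have "\<And>z. (d, z) \<in> (adj ends F)\<^sup>* \<Longrightarrow> z \<in> verts ends D"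
    proof -
      fix z assume "(d, z) \<in> (adj ends F)\<^sup>*"
      then show "z \<in> verts ends D"
      proof (induction rule: rtrancl_induct)
        case base then show ?case using dVD .
      next
        case (step y z)
        obtain g where g: "g \<in> F" "y \<in> ends g" "z \<in> ends g" using adjD[OF step(2)] by blast
        have yC: "y \<in> C" using step(3) DC verts_comp_edges[of F C] V_mono[of D ?EC] by blast
        have "ends g \<subseteq> C" using edge_in_comp[OF FE g(1) g(2) yC C] .
        then have gEC: "g \<in> ?EC" using g(1) unfolding comp_edges_def by blast
        show ?case
        proof (cases "g \<in> D")
          case True then show ?thesis using g(3) unfolding verts_def by blast
        next
          case False
          then have "ends g \<inter> verts ends D \<noteq> {}" using g(2) step(3) by blast
          then show ?thesis using no gEC False by blast
        qed
      qed
    qed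
    then have "u \<in> verts ends D" using du by blast
    then show False using no f0 u by blast
  qed
qed

lemma comp_vert_edge:
  assumes FE: "F \<subseteq> E" and C: "C \<in> comps ends Vt F" and x: "x \<in> C" and y: "y \<in> C" and xy: "x \<noteq> y"
  shows "x \<in> verts ends (comp_edges ends F C)"
proof -
  have "C = comp_of ends Vt F x" using comp_of_mem[OF C x] .
  then have "(x, y) \<in> (adj ends F)\<^sup>*" using y comp_of_iff by blast
  then obtain z where "(x, z) \<in> adj ends F" using xy by (metis converse_rtranclE)
  then obtain g where g: "g \<in> F" "x \<in> ends g" using adjD by blast
  have "ends g \<subseteq> C" using edge_in_comp[OF FE g(1) g(2) x C] .
  then have "g \<in> comp_edges ends F C" using g(1) unfolding comp_edges_def by blast
  then show ?thesis using g(2) unfolding verts_def by blast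
qed

lemma comp_E_verts:
  assumes C: "C \<in> comps ends Vt E"
  shows "verts ends (comp_edges ends E C) = C"
proof
  show "verts ends (comp_edges ends E C) \<subseteq> C" by (rule verts_comp_edges)
  show "C \<subseteq> verts ends (comp_edges ends E C)"
  proof
    fix x assume x: "x \<in> C"
    then have "x \<in> Vt" using comp_sub[OF C] by blast
    then obtain g where g: "g \<in> E" "x \<in> ends g" unfolding verts_def by blast
    have "ends g \<subseteq> C" using edge_in_comp[OF _ g(1) g(2) x C] by blast
    then have "g \<in> comp_edges ends E C" using g(1) unfolding comp_edges_def by blast
    then show "x \<in> verts ends (comp_edges ends E C)" using g(2) unfolding verts_def by blast
  qed
qed

lemma comp_ne_verts:
  assumes FE: "F \<subseteq> E" and C: "C \<in> comps ends Vt F" and ne: "comp_edges ends F C \<noteq> {}"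
  shows "verts ends (comp_edges ends F C) = C"
proof
  show "verts ends (comp_edges ends F C) \<subseteq> C" by (rule verts_comp_edges)
  show "C \<subseteq> verts ends (comp_edges ends F C)"
  proof
    fix x assume x: "x \<in> C"
    obtain g where g: "g \<in> comp_edges ends F C" using ne by blast
    have gE: "g \<in> E" using g FE comp_edges_sub by blast
    obtain w where w: "w \<in> ends g" using ends_ne[OF gE] by blast
    have wC: "w \<in> C" using w g unfolding comp_edges_def by blast
    show "x \<in> verts ends (comp_edges ends F C)"
    proof (cases "x = w")
      case True then show ?thesis using w g unfolding verts_def by blast
    next
      case False then show ?thesis using comp_vert_edge[OF FE C x wC] by blast
    qed
  qed
qed

lemma comp_empty_edges:
  assumes FE: "F \<subseteq> E" and C: "C \<in> comps ends Vt F" and e: "comp_edges ends F C = {}"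
  shows "card C = 1"
proof -
  obtain x where x: "x \<in> Vt" "C = comp_of ends Vt F x" using compsE[OF C] by blast
  have xC: "x \<in> C" using x comp_self by simp
  have "C = {x}"
  proof
    show "C \<subseteq> {x}"
    proof
      fix y assume y: "y \<in> C"
      show "y \<in> {x}"
      proof (rule ccontr)
        assume "y \<notin> {x}"
        then have "x \<in> verts ends (comp_edges ends F C)" using comp_vert_edge[OF FE C xC y] by auto
        then show False using e by simp
      qed
    qed
    show "{x} \<subseteq> C" using xC by blast
  qed
  then show ?thesis by simp
qed

lemma Delta_comp_dlt:
  assumes "verts ends (comp_edges ends F C) = C"
  shows "Delta_comp ends F C = dlt ends (comp_edges ends F C)"
  using assms unfolding Delta_comp_def dlt_def by simp

lemma Delta_comp_ge:
  assumes FE: "F \<subseteq> E" and C: "C \<in> comps ends Vt F"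
  shows "Delta_comp ends F C \<ge> -1"
proof (cases "comp_edges ends F C = {}")
  case True
  then show ?thesis using comp_empty_edges[OF FE C True] unfolding Delta_comp_def by simp
next
  case False
  then obtain g where g: "g \<in> comp_edges ends F C" by blast
  have ECE: "comp_edges ends F C \<subseteq> E" using FE comp_edges_sub by blast
  have gE: "g \<in> E" using g ECE by blast
  have "dlt ends {g} \<le> dlt ends (comp_edges ends F C)"
    using dlt_le_conn[OF conn_comp[OF FE C] ECE] g by blast
  moreover have "dlt ends {g} \<ge> -1" using dlt_single_bounds[OF gE] by blast
  ultimately show ?thesis using Delta_comp_dlt[OF comp_ne_verts[OF FE C False]] by linarith
qed

end


definition leafless :: "('e \<Rightarrow> 'v set) \<Rightarrow> 'e set \<Rightarrow> bool" where
  "leafless ends Z \<longleftrightarrow> (\<forall>u g. \<not> is_leaf ends (verts ends Z) Z u g)"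

definition LL :: "('e \<Rightarrow> 'v set) \<Rightarrow> 'e set \<Rightarrow> 'e set" where
  "LL ends F = \<Union> {Z. Z \<subseteq> F \<and> leafless ends Z}"

context G
begin

lemma LL_sub: "LL ends F \<subseteq> F"
  unfolding LL_def by blast

lemma leafless_LL: "Z \<subseteq> F \<Longrightarrow> leafless ends Z \<Longrightarrow> Z \<subseteq> LL ends F"
  unfolding LL_def by blast

lemma LL_leafless: "leafless ends (LL ends F)"
  unfolding leafless_def
proof (intro allI notI)
  fix u g assume lf: "is_leaf ends (verts ends (LL ends F)) (LL ends F) u g"
  note l = is_leafD[OF lf]
  then obtain Z where Z: "Z \<subseteq> F" "leafless ends Z" "g \<in> Z" unfolding LL_def by blast
  have ZL: "Z \<subseteq> LL ends F" using Z leafless_LL by blast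
  have "u \<in> verts ends Z" using Z(3) l unfolding verts_def by blast
  moreover have "\<forall>h\<in>Z. u \<in> ends h \<longrightarrow> h = g" using l ZL by blast
  ultimately have "is_leaf ends (verts ends Z) Z u g" unfolding is_leaf_def using l Z(3) by blast
  then show False using Z(2) unfolding leafless_def by blast
qed

lemma leafless_no_leaf: "leafless ends Z \<Longrightarrow> \<not> is_leaf ends (verts ends Z) Z u g"
  unfolding leafless_def by blast

definition kinv :: "'v set \<Rightarrow> 'e set \<Rightarrow> 'e set \<Rightarrow> ('v set \<times> 'e set) \<Rightarrow> bool" where
  "kinv C EC L H \<longleftrightarrow> snd H \<subseteq> EC \<and> L \<subseteq> snd H \<and> verts ends (snd H) \<subseteq> fst H \<and> fst H \<subseteq> C \<and>
     card C + card (snd H) = card EC + card (fst H)"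

lemma kinv_step:
  assumes C: "C \<in> comps ends Vt E" and EC: "EC = comp_edges ends E C" and L: "L = LL ends EC"
    and inv: "kinv C EC L Gs" and st: "leaf_step ends Gs H"
  shows "kinv C EC L H \<and> card (snd H) < card (snd Gs)"
proof -
  obtain v e where lf: "is_leaf ends (fst Gs) (snd Gs) v e" and H: "H = (fst Gs - {v}, snd Gs - {e})"
    using st unfolding leaf_step_def by blast
  note l = is_leafD[OF lf]
  have i: "snd Gs \<subseteq> EC" "L \<subseteq> snd Gs" "verts ends (snd Gs) \<subseteq> fst Gs" "fst Gs \<subseteq> C"
    "card C + card (snd Gs) = card EC + card (fst Gs)" using inv unfolding kinv_def by auto
  have ECE: "EC \<subseteq> E" using EC comp_edges_sub by blast
  have finC: "finite C" using comp_sub[OF C] finV[of E] finite_subset by blast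
  have finS: "finite (snd Gs)" using i(1) ECE finX by blast
  have finF: "finite (fst Gs)" using i(4) finC finite_subset by blast
  have eL: "e \<notin> L"
  proof
    assume eL: "e \<in> L"
    have "v \<in> verts ends L" using eL l unfolding verts_def by blast
    moreover have "\<forall>h\<in>L. v \<in> ends h \<longrightarrow> h = e" using l i(2) by blast
    ultimately have "is_leaf ends (verts ends L) L v e" unfolding is_leaf_def using l eL by blast
    then show False using leafless_no_leaf[OF LL_leafless] L by blast
  qed
  have vs: "verts ends (snd Gs - {e}) \<subseteq> fst Gs - {v}"
  proof
    fix x assume "x \<in> verts ends (snd Gs - {e})"
    then obtain h where h: "h \<in> snd Gs" "h \<noteq> e" "x \<in> ends h" unfolding verts_def by blast
    have "x \<in> fst Gs" using h i(3) unfolding verts_def by blast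
    moreover have "x \<noteq> v" using h l by blast
    ultimately show "x \<in> fst Gs - {v}" by blast
  qed
  have c1: "card (fst Gs - {v}) = card (fst Gs) - 1" using l by simp
  have c2: "card (snd Gs - {e}) = card (snd Gs) - 1" using l by simp
  have p1: "card (fst Gs) \<ge> 1" using l finF by (metis One_nat_def Suc_leI card_gt_0_iff empty_iff)
  have p2: "card (snd Gs) \<ge> 1" using l finS by (metis One_nat_def Suc_leI card_gt_0_iff empty_iff)
  have k1: "snd Gs - {e} \<subseteq> EC" using i(1) by blast
  have k2: "L \<subseteq> snd Gs - {e}" using i(2) eL by blast
  have k4: "fst Gs - {v} \<subseteq> C" using i(4) by blast
  have k5: "card C + card (snd Gs - {e}) = card EC + card (fst Gs - {v})"
    using i(5) c1 c2 p1 p2 by linarith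
  have "kinv C EC L H"
    unfolding kinv_def H fst_conv snd_conv using k1 k2 vs k4 k5 by blast
  moreover have "card (snd H) < card (snd Gs)" using H c2 p2 by simp
  ultimately show ?thesis by blast
qed

lemma kinv_rtr:
  assumes C: "C \<in> comps ends Vt E" and EC: "EC = comp_edges ends E C" and L: "L = LL ends EC"
    and r: "(leaf_step ends)\<^sup>*\<^sup>* Gs H" and inv: "kinv C EC L Gs"
  shows "kinv C EC L H"
  using r inv
proof (induction rule: rtranclp_induct)
  case base then show ?case .
next
  case (step y z) then show ?case using kinv_step[OF C EC L] by blast
qed

lemma kinv_final_exists:
  assumes C: "C \<in> comps ends Vt E" and EC: "EC = comp_edges ends E C" and L: "L = LL ends EC"
    and inv: "kinv C EC L Gs"
  shows "\<exists>H. (leaf_step ends)\<^sup>*\<^sup>* Gs H \<and> no_leaves ends H"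
  using inv
proof (induction "card (snd Gs)" arbitrary: Gs rule: less_induct)
  case less
  show ?case
  proof (cases "no_leaves ends Gs")
    case True then show ?thesis by blast
  next
    case False
    then obtain v e where lf: "is_leaf ends (fst Gs) (snd Gs) v e" unfolding no_leaves_def by blast
    define Gt where "Gt = (fst Gs - {v}, snd Gs - {e})"
    have st: "leaf_step ends Gs Gt" unfolding leaf_step_def Gt_def using lf by blast
    have k: "kinv C EC L Gt \<and> card (snd Gt) < card (snd Gs)"
      using kinv_step[OF C EC L less(2) st] .
    then obtain H where "(leaf_step ends)\<^sup>*\<^sup>* Gt H" "no_leaves ends H" using less(1) by blast
    then show ?thesis using st by (meson converse_rtranclp_into_rtranclp)
  qed
qed

lemma kinv_final_char:
  assumes C: "C \<in> comps ends Vt E" and EC: "EC = comp_edges ends E C" and L: "L = LL ends EC"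
    and D1: "Delta_comp ends E C \<ge> 1"
    and inv: "kinv C EC L H" and nl: "no_leaves ends H"
  shows "H = (verts ends L, L)"
proof -
  have i: "snd H \<subseteq> EC" "L \<subseteq> snd H" "verts ends (snd H) \<subseteq> fst H" "fst H \<subseteq> C"
    "card C + card (snd H) = card EC + card (fst H)" using inv unfolding kinv_def by auto
  have ECE: "EC \<subseteq> E" using EC comp_edges_sub by blast
  have "leafless ends (snd H)"
    unfolding leafless_def
  proof (intro allI notI)
    fix u g assume lf: "is_leaf ends (verts ends (snd H)) (snd H) u g"
    note l = is_leafD[OF lf]
    have "u \<in> fst H" using l i(3) by blast
    then have "is_leaf ends (fst H) (snd H) u g" unfolding is_leaf_def using l by blast
    then show False using nl unfolding no_leaves_def by blast
  qed
  then have "snd H \<subseteq> L" using leafless_LL i(1) L by blast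
  then have sH: "snd H = L" using i(2) by blast
  have finC: "finite C" using comp_sub[OF C] finV[of E] finite_subset by blast
  have cE: "int (card EC) - int (card C) \<ge> 1" using D1 EC unfolding Delta_comp_def by simp
  have cc: "card C + card L = card EC + card (fst H)" using i(5) sH by simp
  have "card L \<ge> 1" using cc cE by linarith
  then have Lne: "L \<noteq> {}" by auto
  have LEC: "L \<subseteq> EC" using i(1) sH by blast
  have g: "card (verts ends EC - verts ends L) \<le> card (EC - L)"
  proof -
    have "conn ends EC" using conn_comp[OF order_refl C] EC by simp
    then show ?thesis using grow[OF _ ECE LEC Lne] by blast
  qed
  have vEC: "verts ends EC = C" using comp_E_verts[OF C] EC by simp
  have cs: "card EC = card L + card (EC - L)" "card (verts ends EC) = card (verts ends L) + card (verts ends EC - verts ends L)"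
    using card_split[OF LEC ECE] by auto
  have cv: "card (verts ends EC) = card C" using vEC by simp
  have "card (fst H) \<le> card (verts ends L)" using g cs cv cc by linarith
  moreover have "verts ends L \<subseteq> fst H" using i(3) sH by blast
  moreover have "finite (fst H)" using i(4) finC finite_subset by blast
  ultimately have "fst H = verts ends L" by (metis card_seteq)
  then show ?thesis using sH by (metis prod.collapse)
qed

lemma kernel_eq:
  assumes C: "C \<in> comps ends Vt E" and D1: "Delta_comp ends E C \<ge> 1"
  shows "kernel ends E C = (verts ends (LL ends (comp_edges ends E C)), LL ends (comp_edges ends E C))"
proof -
  define EC where "EC = comp_edges ends E C"
  define L where "L = LL ends EC"
  have inv0: "kinv C EC L (C, EC)"
    unfolding kinv_def fst_conv snd_conv using LL_sub[of EC] verts_comp_edges[of E C] L_def EC_def by simp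
  obtain H where H: "(leaf_step ends)\<^sup>*\<^sup>* (C, EC) H" "no_leaves ends H"
    using kinv_final_exists[OF C EC_def L_def inv0] by blast
  have HH: "H = (verts ends L, L)"
    using kinv_final_char[OF C EC_def L_def D1 kinv_rtr[OF C EC_def L_def H(1) inv0] H(2)] .
  have "kernel ends E C = (verts ends L, L)"
    unfolding kernel_def EC_def[symmetric]
  proof (rule the_equality)
    show "(leaf_step ends)\<^sup>*\<^sup>* (C, EC) (verts ends L, L) \<and> no_leaves ends (verts ends L, L)"
      using H HH by simp
    fix H' assume H': "(leaf_step ends)\<^sup>*\<^sup>* (C, EC) H' \<and> no_leaves ends H'"
    then show "H' = (verts ends L, L)"
      using kinv_final_char[OF C EC_def L_def D1 kinv_rtr[OF C EC_def L_def _ inv0]] by blast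
  qed
  then show ?thesis unfolding L_def EC_def .
qed

lemma LL_dlt:
  assumes C: "C \<in> comps ends Vt E" and D1: "Delta_comp ends E C \<ge> 1"
  shows "dlt ends (LL ends (comp_edges ends E C)) = Delta_comp ends E C"
    "LL ends (comp_edges ends E C) \<noteq> {}"
proof -
  define EC where "EC = comp_edges ends E C"
  define L where "L = LL ends EC"
  have inv0: "kinv C EC L (C, EC)"
    unfolding kinv_def fst_conv snd_conv using LL_sub[of EC] verts_comp_edges[of E C] L_def EC_def by simp
  obtain H where H: "(leaf_step ends)\<^sup>*\<^sup>* (C, EC) H" "no_leaves ends H"
    using kinv_final_exists[OF C EC_def L_def inv0] by blast
  have inv: "kinv C EC L H" using kinv_rtr[OF C EC_def L_def H(1) inv0] .
  have HH: "H = (verts ends L, L)"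
    using kinv_final_char[OF C EC_def L_def D1 inv H(2)] .
  have "card C + card L = card EC + card (verts ends L)" using inv HH unfolding kinv_def by simp
  then show "dlt ends (LL ends (comp_edges ends E C)) = Delta_comp ends E C"
    unfolding dlt_def Delta_comp_def L_def[symmetric] EC_def[symmetric] by linarith
  have cE: "int (card EC) - int (card C) \<ge> 1" using D1 unfolding EC_def Delta_comp_def by simp
  have "card C + card L = card EC + card (verts ends L)" by fact
  then have "card L \<ge> 1" using cE by linarith
  then show "LL ends (comp_edges ends E C) \<noteq> {}" unfolding L_def[symmetric] EC_def[symmetric]
    by (metis card.empty not_one_le_zero)
qed

end


context G
begin

lemma core_char:
  "e \<in> core_edges E ends \<longleftrightarrow>
     (\<exists>C\<in>comps ends Vt E. Delta_comp ends E C \<ge> 1 \<and> e \<in> LL ends (comp_edges ends E C))"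
proof
  assume "e \<in> core_edges E ends"
  then obtain C where C: "C \<in> comps ends Vt E" "Delta_comp ends E C \<ge> 1" "e \<in> snd (kernel ends E C)"
    unfolding core_edges_def by blast
  then show "\<exists>C\<in>comps ends Vt E. Delta_comp ends E C \<ge> 1 \<and> e \<in> LL ends (comp_edges ends E C)"
    using kernel_eq[OF C(1,2)] by auto
next
  assume "\<exists>C\<in>comps ends Vt E. Delta_comp ends E C \<ge> 1 \<and> e \<in> LL ends (comp_edges ends E C)"
  then obtain C where C: "C \<in> comps ends Vt E" "Delta_comp ends E C \<ge> 1" "e \<in> LL ends (comp_edges ends E C)"
    by blast
  then have "e \<in> snd (kernel ends E C)" using kernel_eq[OF C(1,2)] by simp
  then show "e \<in> core_edges E ends" unfolding core_edges_def using C by blast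
qed

lemma edge_comp:
  assumes "f \<in> E" "w \<in> ends f"
  shows "comp_of ends Vt E w \<in> comps ends Vt E" "f \<in> comp_edges ends E (comp_of ends Vt E w)"
proof -
  have wV: "w \<in> Vt" using assms unfolding verts_def by blast
  show C: "comp_of ends Vt E w \<in> comps ends Vt E" using comps_I[OF wV] .
  have "w \<in> comp_of ends Vt E w" using comp_self[OF wV] .
  then have "ends f \<subseteq> comp_of ends Vt E w" using edge_in_comp[OF order_refl assms(1) assms(2) _ C] by blast
  then show "f \<in> comp_edges ends E (comp_of ends Vt E w)" using assms(1) unfolding comp_edges_def by blast
qed

lemma SC_leafless:
  assumes CE: "C0 \<subseteq> E" and SC: "SC ends C0"
  shows "leafless ends C0"
  unfolding leafless_def
proof (intro allI notI)
  fix u g assume lf: "is_leaf ends (verts ends C0) C0 u g"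
  note l = is_leafD[OF lf]
  define D where "D = C0 - {g}"
  have DC: "D \<subset> C0" using l D_def by blast
  have vD: "verts ends D \<subseteq> verts ends C0 - {u}"
  proof
    fix x assume "x \<in> verts ends D"
    then obtain h where h: "h \<in> C0" "h \<noteq> g" "x \<in> ends h" unfolding verts_def D_def by blast
    then have "x \<noteq> u" using l by blast
    then show "x \<in> verts ends C0 - {u}" using h unfolding verts_def by blast
  qed
  have fin: "finite (verts ends C0)" using finV[OF CE] .
  have "card (verts ends D) \<le> card (verts ends C0 - {u})" using card_mono[OF _ vD] fin by blast
  also have "\<dots> = card (verts ends C0) - 1" using l by simp
  finally have c1: "card (verts ends D) \<le> card (verts ends C0) - 1" .
  have c2: "card D = card C0 - 1" using l D_def by simp
  have p: "card (verts ends C0) \<ge> 1" using l fin by (metis One_nat_def Suc_leI card_gt_0_iff empty_iff)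
  have p2: "card C0 \<ge> 1" using l finX[OF CE] by (metis One_nat_def Suc_leI card_gt_0_iff empty_iff)
  have "dlt ends D \<ge> dlt ends C0" unfolding dlt_def using c1 c2 p p2 by linarith
  then show False using SC_mono_lt[OF SC DC] by linarith
qed

lemma circuit_in_core:
  assumes k: "k \<ge> 1" and C0: "C0 \<in> Mk_circuits E ends k" and f: "f \<in> C0"
  shows "f \<in> core_edges E ends"
proof -
  have C0E: "C0 \<subseteq> E" and dC0: "dlt ends C0 = int k" and SC: "SC ends C0"
    using circuit_char[OF k] C0 by auto
  have fE: "f \<in> E" using f C0E by blast
  obtain w where w: "w \<in> ends f" using ends_ne[OF fE] by blast
  define A where "A = comp_of ends Vt E w"
  have A: "A \<in> comps ends Vt E" "f \<in> comp_edges ends E A" using edge_comp[OF fE w] A_def by auto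
  define EA where "EA = comp_edges ends E A"
  have EAE: "EA \<subseteq> E" using comp_edges_sub EA_def by blast
  define CA where "CA = C0 \<inter> EA"
  define CR where "CR = C0 - EA"
  have CAE: "CA \<subseteq> E" "CR \<subseteq> E" using C0E CA_def CR_def by auto
  have disj: "verts ends CA \<inter> verts ends CR = {}"
  proof (rule ccontr)
    assume "verts ends CA \<inter> verts ends CR \<noteq> {}"
    then obtain x g h where g: "g \<in> CA" "x \<in> ends g" and h: "h \<in> CR" "x \<in> ends h"
      unfolding verts_def by blast
    have "x \<in> A" using g unfolding CA_def EA_def comp_edges_def by blast
    then have "ends h \<subseteq> A" using edge_in_comp[OF order_refl _ h(2) _ A(1)] h CAE by blast
    then have "h \<in> EA" using h CAE unfolding EA_def comp_edges_def by blast
    then show False using h unfolding CR_def by blast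
  qed
  have C0split: "C0 = CA \<union> CR" unfolding CA_def CR_def by blast
  have dsum: "dlt ends C0 = dlt ends CA + dlt ends CR"
    using dlt_add[OF CAE disj] C0split by simp
  have fCA: "f \<in> CA" using f A(2) unfolding CA_def EA_def by blast
  have CRC: "CR \<subset> C0" using fCA f unfolding CR_def CA_def by blast
  have dCA: "dlt ends CA \<ge> 1"
  proof (rule ccontr)
    assume "\<not> dlt ends CA \<ge> 1"
    then have "dlt ends CR \<ge> dlt ends C0" using dsum by linarith
    then show False using SC_mono_lt[OF SC CRC] by linarith
  qed
  have vEA: "verts ends EA = A" using comp_E_verts[OF A(1)] EA_def by simp
  have "dlt ends CA \<le> dlt ends EA"
    using dlt_le_conn[OF conn_comp[OF order_refl A(1)] _ _ ] EAE fCA EA_def CA_def by blast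
  then have DA: "Delta_comp ends E A \<ge> 1"
    using Delta_comp_dlt[of E A] vEA dCA EA_def by simp
  have lC0: "leafless ends C0" using SC_leafless[OF C0E SC] .
  have lCA: "leafless ends CA"
    unfolding leafless_def
  proof (intro allI notI)
    fix u g assume lf: "is_leaf ends (verts ends CA) CA u g"
    note l = is_leafD[OF lf]
    have uA: "u \<in> A" using l unfolding CA_def EA_def comp_edges_def by blast
    have "\<forall>h\<in>C0. u \<in> ends h \<longrightarrow> h = g"
    proof (intro ballI impI)
      fix h assume h: "h \<in> C0" "u \<in> ends h"
      have "ends h \<subseteq> A" using edge_in_comp[OF order_refl _ h(2) uA A(1)] h C0E by blast
      then have "h \<in> CA" using h C0E unfolding CA_def EA_def comp_edges_def by blast
      then show "h = g" using l h by blast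
    qed
    moreover have "u \<in> verts ends C0" using l C0split V_Un by blast
    moreover have "g \<in> C0" using l CA_def by blast
    ultimately have "is_leaf ends (verts ends C0) C0 u g" unfolding is_leaf_def using l by blast
    then show False using lC0 unfolding leafless_def by blast
  qed
  have "f \<in> LL ends EA" using leafless_LL[OF _ lCA] fCA CA_def by blast
  then show ?thesis using core_char A(1) DA EA_def by blast
qed

lemma core_in_circuit:
  assumes k: "k \<ge> 1" and C0: "C0 \<in> Mk_circuits E ends k" and e: "e \<in> core_edges E ends"
  shows "\<exists>C\<in>Mk_circuits E ends k. e \<in> C"
proof -
  have C0E: "C0 \<subseteq> E" and dC0: "dlt ends C0 = int k" and SC0: "SC ends C0"
    using circuit_char[OF k] C0 by auto
  obtain A where A: "A \<in> comps ends Vt E" "Delta_comp ends E A \<ge> 1" "e \<in> LL ends (comp_edges ends E A)"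
    using core_char e by blast
  define EA where "EA = comp_edges ends E A"
  have EAE: "EA \<subseteq> E" using comp_edges_sub EA_def by blast
  have cEA: "conn ends EA" using conn_comp[OF order_refl A(1)] EA_def by simp
  have vEA: "verts ends EA = A" using comp_E_verts[OF A(1)] EA_def by simp
  have dEA: "dlt ends EA = Delta_comp ends E A" using Delta_comp_dlt[of E A] vEA EA_def by simp
  define PN where "PN = (\<lambda>N. N \<subseteq> EA \<and> dlt ends N \<ge> dlt ends EA)"
  have "PN EA" unfolding PN_def by simp
  then obtain N where PNN: "PN N" and minN: "\<And>Y. PN Y \<Longrightarrow> card N \<le> card Y"
    using ex_has_least_nat[of PN EA card] by blast
  have NEA: "N \<subseteq> EA" using PNN PN_def by blast
  have NE: "N \<subseteq> E" using NEA EAE by blast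
  have Nne: "N \<noteq> {}" using PNN A(2) dEA unfolding PN_def by auto
  have dN: "dlt ends N = dlt ends EA"
    using dlt_le_conn[OF cEA EAE NEA Nne] PNN unfolding PN_def by linarith
  have SCN: "SC ends N"
    unfolding SC_def
  proof (intro allI impI)
    fix D assume D: "D \<subset> N"
    then have "card D < card N" using NE finX psubset_card_mono by blast
    then have "\<not> PN D" using minN[of D] by linarith
    then show "dlt ends D < dlt ends N" using D NEA dN unfolding PN_def by auto
  qed
  have LN: "LL ends EA \<subseteq> N"
  proof (rule LE[OF cEA EAE NEA Nne])
    show "dlt ends EA \<le> dlt ends N" using dN by simp
    show "LL ends EA \<subseteq> EA" by (rule LL_sub)
    show "\<forall>u g. is_leaf ends (verts ends (LL ends EA)) (LL ends EA) u g \<longrightarrow> u \<in> verts ends N"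
      using LL_leafless[of EA] unfolding leafless_def by blast
  qed
  have eN: "e \<in> N" using LN A(3) EA_def by blast
  show ?thesis
  proof (cases "int k \<le> dlt ends N")
    case True
    obtain W where W: "W \<subseteq> N" "SC ends W" "e \<in> W" "dlt ends W = int k"
      using down[OF NE SCN eN k True] by blast
    have "W \<in> Mk_circuits E ends k" using circuit_char[OF k] W NE by blast
    then show ?thesis using W by blast
  next
    case False
    show ?thesis
    proof (cases "N \<subseteq> C0")
      case True then show ?thesis using eN C0 by blast
    next
      case False2: False
      have "N \<inter> C0 \<subset> N" using False2 by blast
      then have lt: "dlt ends (N \<inter> C0) < dlt ends N" using SC_mono_lt[OF SCN] by blast
      have "dlt ends (N \<union> C0) + dlt ends (N \<inter> C0) \<ge> dlt ends N + dlt ends C0"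
        using dlt_super[OF NE C0E] .
      then have dK: "dlt ends (N \<union> C0) \<ge> int k" using lt dC0 by linarith
      have KE: "N \<union> C0 \<subseteq> E" using NE C0E by blast
      obtain X where X: "N \<subseteq> X" "X \<subseteq> N \<union> C0" "SC ends X" "dlt ends X = int k"
        using up[OF _ KE SCN _ dK] False by fastforce
      have "X \<in> Mk_circuits E ends k" using circuit_char[OF k] X KE by blast
      then show ?thesis using X eN by blast
    qed
  qed
qed

lemma coloops_eq:
  assumes k: "k \<ge> 1" and nt: "Mk_circuits E ends k \<noteq> {}"
  shows "coloops E (Mk_circuits E ends k) = E - core_edges E ends"
proof
  obtain C0 where C0: "C0 \<in> Mk_circuits E ends k" using nt by blast
  show "coloops E (Mk_circuits E ends k) \<subseteq> E - core_edges E ends"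
  proof
    fix e assume e: "e \<in> coloops E (Mk_circuits E ends k)"
    then have eE: "e \<in> E" and nc: "\<forall>C\<in>Mk_circuits E ends k. e \<notin> C" unfolding coloops_def by auto
    have "e \<notin> core_edges E ends" using core_in_circuit[OF k C0] nc by blast
    then show "e \<in> E - core_edges E ends" using eE by blast
  qed
  show "E - core_edges E ends \<subseteq> coloops E (Mk_circuits E ends k)"
    unfolding coloops_def using circuit_in_core[OF k] by blast
qed

end


context G
begin

lemma rtr_mono: "F \<subseteq> F' \<Longrightarrow> (x, y) \<in> (adj ends F)\<^sup>* \<Longrightarrow> (x, y) \<in> (adj ends F')\<^sup>*"
  using rtrancl_mono[OF adj_mono] by blast

context
  fixes e w1 w2
  assumes eE: "e \<in> E" and ew: "ends e = {w1, w2}"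
begin

abbreviation "F \<equiv> E - {e}"
abbreviation "A \<equiv> comp_of ends Vt E w1"
abbreviation "P1 \<equiv> comp_of ends Vt F w1"
abbreviation "P2 \<equiv> comp_of ends Vt F w2"

lemma FE: "F \<subseteq> E" by blast

lemma wV: "w1 \<in> Vt" "w2 \<in> Vt" using eE ew unfolding verts_def by blast+

lemma A_comp: "A \<in> comps ends Vt E" using comps_I[OF wV(1)] .

lemma ends_e_A: "ends e \<subseteq> A"
  using edge_in_comp[OF order_refl eE _ _ A_comp, of w1] ew comp_self[OF wV(1)] by blast

lemma w2A: "w2 \<in> A" using ends_e_A ew by blast

lemma P_comps: "P1 \<in> comps ends Vt F" "P2 \<in> comps ends Vt F"
  using comps_I[OF wV(1)] comps_I[OF wV(2)] by auto

lemma P_sub_A: "P1 \<subseteq> A" "P2 \<subseteq> A"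
proof -
  have "comp_of ends Vt E w2 = A" using comp_eq[OF w2A] .
  then have h: "\<And>w. w \<in> {w1, w2} \<Longrightarrow> comp_of ends Vt F w \<subseteq> A"
  proof -
    fix w assume w: "w \<in> {w1, w2}" 
    assume c2: "comp_of ends Vt E w2 = A"
    show "comp_of ends Vt F w \<subseteq> A"
    proof
      fix x assume "x \<in> comp_of ends Vt F w"
      then have "x \<in> Vt" "(w, x) \<in> (adj ends F)\<^sup>*" using comp_of_iff by blast+
      then have "x \<in> comp_of ends Vt E w" using rtr_mono[OF FE] comp_of_iff by blast
      then show "x \<in> A" using w c2 by blast
    qed
  qed
  show "P1 \<subseteq> A" "P2 \<subseteq> A" using h by auto
qed

lemma A_sub_P: "A \<subseteq> P1 \<union> P2"
proof
  fix x assume "x \<in> A"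
  then have r: "(w1, x) \<in> (adj ends E)\<^sup>*" using comp_of_iff by blast
  have "\<And>z. (w1, z) \<in> (adj ends E)\<^sup>* \<Longrightarrow> z \<in> P1 \<union> P2"
  proof -
    fix z assume "(w1, z) \<in> (adj ends E)\<^sup>*"
    then show "z \<in> P1 \<union> P2"
    proof (induction rule: rtrancl_induct)
      case base then show ?case using comp_self[OF wV(1)] by blast
    next
      case (step y z)
      obtain g where g: "g \<in> E" "y \<in> ends g" "z \<in> ends g" using adjD[OF step(2)] by blast
      have zV: "z \<in> Vt" using g unfolding verts_def by blast
      show ?case
      proof (cases "g = e")
        case True
        then have "z = w1 \<or> z = w2" using g ew by blast
        then show ?thesis using comp_self wV by blast
      next
        case False
        then have gF: "g \<in> F" using g by blast
        have yz: "(y, z) \<in> adj ends F" using adjI[OF gF g(2) g(3)] .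
        have "\<exists>w\<in>{w1, w2}. y \<in> comp_of ends Vt F w" using step(3) by blast
        then obtain w where w: "w \<in> {w1, w2}" "y \<in> comp_of ends Vt F w" by blast
        then have "(w, y) \<in> (adj ends F)\<^sup>*" using comp_of_iff by blast
        then have "(w, z) \<in> (adj ends F)\<^sup>*" using yz by (rule rtrancl_into_rtrancl)
        then have "z \<in> comp_of ends Vt F w" using zV comp_of_iff by blast
        then show ?thesis using w(1) by blast
      qed
    qed
  qed
  then show "x \<in> P1 \<union> P2" using r by blast
qed

lemma A_eq: "A = P1 \<union> P2" using A_sub_P P_sub_A by blast

lemma other_comp:
  assumes x: "x \<in> Vt" "x \<notin> A"
  shows "comp_of ends Vt F x = comp_of ends Vt E x"
proof
  show "comp_of ends Vt F x \<subseteq> comp_of ends Vt E x"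
    using rtr_mono[OF FE] unfolding comp_of_def by blast
  show "comp_of ends Vt E x \<subseteq> comp_of ends Vt F x"
  proof
    fix y assume "y \<in> comp_of ends Vt E x"
    then have yV: "y \<in> Vt" and r: "(x, y) \<in> (adj ends E)\<^sup>*" using comp_of_iff by blast+
    have "\<And>z. (x, z) \<in> (adj ends E)\<^sup>* \<Longrightarrow> (x, z) \<in> (adj ends F)\<^sup>*"
    proof -
      fix z assume "(x, z) \<in> (adj ends E)\<^sup>*"
      then show "(x, z) \<in> (adj ends F)\<^sup>*"
      proof (induction rule: rtrancl_induct)
        case base then show ?case by simp
      next
        case (step y z)
        obtain g where g: "g \<in> E" "y \<in> ends g" "z \<in> ends g" using adjD[OF step(2)] by blast
        have ge: "g \<noteq> e"
        proof
          assume "g = e"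
          then have yA: "y \<in> A" using g ends_e_A by blast
          have "(x, y) \<in> (adj ends E)\<^sup>*" using rtr_mono[OF FE step(3)] .
          moreover have yVt: "y \<in> Vt" using g unfolding verts_def by blast
          ultimately have "y \<in> comp_of ends Vt E x" using comp_of_iff by blast
          then have "comp_of ends Vt E y = comp_of ends Vt E x" by (rule comp_eq)
          moreover have "comp_of ends Vt E y = A" using comp_eq[OF yA] .
          ultimately have "x \<in> A" using comp_self[OF x(1)] by blast
          then show False using x by blast
        qed
        then have "g \<in> F" using g by blast
        then have "(y, z) \<in> adj ends F" using adjI g by blast
        then show ?case using step(3) by (meson rtrancl_into_rtrancl)
      qed
    qed
    then show "y \<in> comp_of ends Vt F x" using r yV comp_of_iff by blast
  qed
qed

lemma P_notin: "P1 \<notin> comps ends Vt E - {A}" "P2 \<notin> comps ends Vt E - {A}"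
proof -
  have h: "\<And>w. w \<in> {w1, w2} \<Longrightarrow> comp_of ends Vt F w \<notin> comps ends Vt E - {A}"
  proof
    fix w assume w: "w \<in> {w1, w2}" and c: "comp_of ends Vt F w \<in> comps ends Vt E - {A}"
    have wV': "w \<in> Vt" using w wV by blast
    have "w \<in> comp_of ends Vt F w" using comp_self[OF wV'] .
    moreover have "w \<in> A" using w ends_e_A ew by blast
    ultimately have "comp_of ends Vt F w = A" using comps_disj[OF _ A_comp] c by blast
    then show False using c by blast
  qed
  show "P1 \<notin> comps ends Vt E - {A}" "P2 \<notin> comps ends Vt E - {A}" using h by auto
qed

lemma comps_F: "comps ends Vt F = (comps ends Vt E - {A}) \<union> {P1, P2}"
proof
  show "comps ends Vt F \<subseteq> (comps ends Vt E - {A}) \<union> {P1, P2}"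
  proof
    fix C assume C: "C \<in> comps ends Vt F"
    obtain x where x: "x \<in> Vt" "C = comp_of ends Vt F x" using compsE[OF C] by blast
    show "C \<in> (comps ends Vt E - {A}) \<union> {P1, P2}"
    proof (cases "x \<in> A")
      case True
      then have "x \<in> P1 \<or> x \<in> P2" using A_sub_P by blast
      then have "C = P1 \<or> C = P2" using comp_eq x by metis
      then show ?thesis by blast
    next
      case False
      then have "C = comp_of ends Vt E x" using other_comp x by simp
      moreover have "comp_of ends Vt E x \<noteq> A" using False comp_self[OF x(1)] by blast
      ultimately show ?thesis using comps_I[OF x(1)] by blast
    qed
  qed
  show "(comps ends Vt E - {A}) \<union> {P1, P2} \<subseteq> comps ends Vt F"
  proof
    fix C assume C: "C \<in> (comps ends Vt E - {A}) \<union> {P1, P2}"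
    show "C \<in> comps ends Vt F"
    proof (cases "C \<in> {P1, P2}")
      case True then show ?thesis using P_comps by blast
    next
      case False
      then have CE: "C \<in> comps ends Vt E" "C \<noteq> A" using C by blast+
      obtain x where x: "x \<in> Vt" "C = comp_of ends Vt E x" using compsE[OF CE(1)] by blast
      have "x \<notin> A"
      proof
        assume "x \<in> A"
        then have "C = A" using comps_disj[OF CE(1) A_comp] comp_self[OF x(1)] x(2) by blast
        then show False using CE by blast
      qed
      then have "C = comp_of ends Vt F x" using other_comp x by simp
      then show ?thesis using comps_I[OF x(1)] by simp
    qed
  qed
qed

lemma other_edges:
  assumes B: "B \<in> comps ends Vt E" "B \<noteq> A"
  shows "comp_edges ends F B = comp_edges ends E B"
proof -
  have "e \<notin> comp_edges ends E B"
  proof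
    assume "e \<in> comp_edges ends E B"
    then have "ends e \<subseteq> B" unfolding comp_edges_def by blast
    then have "w1 \<in> B" using ew by blast
    then have "B = A" using comps_disj[OF B(1) A_comp] comp_self[OF wV(1)] by blast
    then show False using B by blast
  qed
  then show ?thesis unfolding comp_edges_def by blast
qed

lemma edges_split: "comp_edges ends F P1 \<union> comp_edges ends F P2 = comp_edges ends E A - {e}"
proof
  show "comp_edges ends F P1 \<union> comp_edges ends F P2 \<subseteq> comp_edges ends E A - {e}"
    using P_sub_A unfolding comp_edges_def by blast
  show "comp_edges ends E A - {e} \<subseteq> comp_edges ends F P1 \<union> comp_edges ends F P2"
  proof
    fix g assume g: "g \<in> comp_edges ends E A - {e}"
    then have gF: "g \<in> F" "ends g \<subseteq> A" unfolding comp_edges_def by blast+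
    have gE: "g \<in> E" using gF by blast
    obtain v where v: "v \<in> ends g" using ends_ne[OF gE] by blast
    have "v \<in> P1 \<or> v \<in> P2" using v gF A_sub_P by blast
    then show "g \<in> comp_edges ends F P1 \<union> comp_edges ends F P2"
    proof
      assume "v \<in> P1"
      then have "ends g \<subseteq> P1" using edge_in_comp[OF FE gF(1) v _ P_comps(1)] by blast
      then show ?thesis using gF unfolding comp_edges_def by blast
    next
      assume "v \<in> P2"
      then have "ends g \<subseteq> P2" using edge_in_comp[OF FE gF(1) v _ P_comps(2)] by blast
      then show ?thesis using gF unfolding comp_edges_def by blast
    qed
  qed
qed

end

end


context G
begin

lemma leaf_other:
  assumes "leafless ends LLL" "g \<in> LLL" "u \<in> ends g" "card (ends g) = 2"
  shows "\<exists>h\<in>LLL. h \<noteq> g \<and> u \<in> ends h"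
proof (rule ccontr)
  assume "\<not> (\<exists>h\<in>LLL. h \<noteq> g \<and> u \<in> ends h)"
  then have "\<forall>h\<in>LLL. u \<in> ends h \<longrightarrow> h = g" by blast
  moreover have "u \<in> verts ends LLL" using assms unfolding verts_def by blast
  ultimately have "is_leaf ends (verts ends LLL) LLL u g" unfolding is_leaf_def using assms by blast
  then show False using assms(1) unfolding leafless_def by blast
qed

context
  fixes e w1 w2
  assumes eE: "e \<in> E" and ew: "ends e = {w1, w2}"
begin

abbreviation "FF \<equiv> E - {e}"
abbreviation "AA \<equiv> comp_of ends Vt E w1"
abbreviation "Q1 \<equiv> comp_of ends Vt FF w1"
abbreviation "Q2 \<equiv> comp_of ends Vt FF w2"
abbreviation "EAA \<equiv> comp_edges ends E AA"
abbreviation "LLL \<equiv> LL ends EAA"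

lemmas FE' = FE[OF eE ew]
lemmas wV' = wV[OF eE ew]
lemmas Acomp' = A_comp[OF eE ew]
lemmas endsA' = ends_e_A[OF eE ew]
lemmas w2A' = w2A[OF eE ew]
lemmas Pc' = P_comps[OF eE ew]
lemmas Psub' = P_sub_A[OF eE ew]
lemmas Aeq' = A_eq[OF eE ew]
lemmas Pnot' = P_notin[OF eE ew]
lemmas compsF' = comps_F[OF eE ew]
lemmas esplit' = edges_split[OF eE ew]

lemma eEA: "e \<in> EAA" using endsA' eE unfolding comp_edges_def by blast

lemma finA: "finite AA" using comp_sub[OF Acomp'] finV[of E] finite_subset by blast

lemma P_disj: "Q1 \<noteq> Q2 \<Longrightarrow> Q1 \<inter> Q2 = {}"
  using comps_disj[OF Pc'(1) Pc'(2)] by blast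

lemma EAE: "EAA \<subseteq> E" using comp_edges_sub by blast

lemma Delta_conn:
  assumes "Q1 = Q2"
  shows "Delta_comp ends FF Q1 = Delta_comp ends E AA - 1" "comp_edges ends FF Q1 = EAA - {e}" "Q1 = AA"
proof -
  show PA: "Q1 = AA" using Aeq' assms by simp
  show ce: "comp_edges ends FF Q1 = EAA - {e}" using esplit' assms by simp
  have "card (EAA - {e}) = card EAA - 1" using eEA by simp
  moreover have "card EAA \<ge> 1" using eEA finX[OF EAE] by (metis One_nat_def Suc_leI card_gt_0_iff empty_iff)
  ultimately show "Delta_comp ends FF Q1 = Delta_comp ends E AA - 1"
    unfolding Delta_comp_def using ce PA by simp
qed

lemma Delta_two:
  assumes ne: "Q1 \<noteq> Q2"
  shows "Delta_comp ends FF Q1 + Delta_comp ends FF Q2 = Delta_comp ends E AA - 1"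
proof -
  have dj: "Q1 \<inter> Q2 = {}" using P_disj[OF ne] .
  have fP: "finite Q1" "finite Q2" using Psub' finA finite_subset by blast+
  have cA: "card AA = card Q1 + card Q2" using Aeq' dj fP card_Un_disjoint by metis
  have dje: "comp_edges ends FF Q1 \<inter> comp_edges ends FF Q2 = {}"
  proof (rule ccontr)
    assume "comp_edges ends FF Q1 \<inter> comp_edges ends FF Q2 \<noteq> {}"
    then obtain g where g: "g \<in> FF" "ends g \<subseteq> Q1" "ends g \<subseteq> Q2" unfolding comp_edges_def by blast
    have "ends g \<noteq> {}" using ends_ne g by blast
    then show False using g dj by blast
  qed
  have fe: "finite (comp_edges ends FF Q1)" "finite (comp_edges ends FF Q2)"
    using finX comp_edges_sub[of FF] by (meson Diff_subset subset_trans)+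
  have "card (EAA - {e}) = card (comp_edges ends FF Q1) + card (comp_edges ends FF Q2)"
    using esplit' dje fe card_Un_disjoint by metis
  moreover have "card (EAA - {e}) = card EAA - 1" using eEA by simp
  moreover have "card EAA \<ge> 1" using eEA finX[OF EAE] by (metis One_nat_def Suc_leI card_gt_0_iff empty_iff)
  ultimately show ?thesis unfolding Delta_comp_def using cA by linarith
qed

lemma tree_side_gen:
  assumes wab: "(wa = w1 \<and> wb = w2) \<or> (wa = w2 \<and> wb = w1)"
    and ne: "comp_of ends Vt FF wa \<noteq> comp_of ends Vt FF wb" and eL: "e \<in> LLL"
  shows "Delta_comp ends FF (comp_of ends Vt FF wa) \<noteq> -1"
proof -
  define Pa where "Pa = comp_of ends Vt FF wa"
  define Pb where "Pb = comp_of ends Vt FF wb"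
  have ewab: "ends e = {wa, wb}" using wab ew by blast
  have waV: "wa \<in> Vt" and wbV: "wb \<in> Vt" using wab wV' by blast+
  have PaC: "Pa \<in> comps ends Vt FF" and PbC: "Pb \<in> comps ends Vt FF"
    using comps_I waV wbV Pa_def Pb_def by blast+
  have ne: "Pa \<noteq> Pb" using ne Pa_def Pb_def by simp
  show ?thesis unfolding Pa_def[symmetric]
proof
  assume d1: "Delta_comp ends FF Pa = -1"
  have dj: "Pa \<inter> Pb = {}" using comps_disj[OF PaC PbC] ne by blast
  have w12: "wa \<noteq> wb" using ne Pa_def Pb_def by blast
  have ce2: "card (ends e) = 2" using ewab w12 by simp
  have lL: "leafless ends LLL" by (rule LL_leafless)
  have LE': "LLL \<subseteq> E" using LL_sub EAE by blast
  have w1P: "wa \<in> Pa" using comp_self waV Pa_def by blast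
  have w2P: "wb \<in> Pb" using comp_self wbV Pb_def by blast
  obtain h where h: "h \<in> LLL" "h \<noteq> e" "wa \<in> ends h" using leaf_other[OF lL eL _ ce2] ewab by blast
  have hF: "h \<in> FF" using h LE' by blast
  have hP: "ends h \<subseteq> Pa" using edge_in_comp[OF FE' hF h(3) w1P PaC] .
  define Y1 where "Y1 = comp_edges ends FF Pa"
  have hY: "h \<in> Y1" using hF hP unfolding Y1_def comp_edges_def by blast
  have Y1E: "Y1 \<subseteq> E" using comp_edges_sub Y1_def by blast
  have cY: "conn ends Y1" using conn_comp[OF FE' PaC] Y1_def by simp
  have vY: "verts ends Y1 = Pa" using comp_ne_verts[OF FE' PaC] hY Y1_def by blast
  have dY: "dlt ends Y1 = -1" using Delta_comp_dlt[of FF Pa] vY d1 Y1_def by simp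
  define Z1 where "Z1 = LLL \<inter> Y1"
  have Y1P: "\<And>g. g \<in> LLL \<Longrightarrow> g \<noteq> e \<Longrightarrow> u \<in> ends g \<Longrightarrow> u \<in> Pa \<Longrightarrow> g \<in> Z1" for u
  proof -
    fix g assume g: "g \<in> LLL" "g \<noteq> e" "u \<in> ends g" "u \<in> Pa"
    have gF: "g \<in> FF" using g LE' by blast
    have "ends g \<subseteq> Pa" using edge_in_comp[OF FE' gF g(3) g(4) PaC] .
    then show "g \<in> Z1" using gF g(1) unfolding Z1_def Y1_def comp_edges_def by blast
  qed
  have notin_e: "\<And>u. u \<in> Pa \<Longrightarrow> u \<noteq> wa \<Longrightarrow> u \<notin> ends e"
    using ewab dj w2P by blast
  have cond: "\<forall>u g. is_leaf ends (verts ends Z1) Z1 u g \<longrightarrow> u \<in> verts ends {h}"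
  proof (intro allI impI)
    fix u g assume lf: "is_leaf ends (verts ends Z1) Z1 u g"
    note l = is_leafD[OF lf]
    show "u \<in> verts ends {h}"
    proof (cases "u = wa")
      case True then show ?thesis using h(3) unfolding verts_def by blast
    next
      case False
      have gL: "g \<in> LLL" "g \<in> Y1" using l Z1_def by blast+
      have uP: "u \<in> Pa" using gL(2) l unfolding Y1_def comp_edges_def by blast
      obtain h' where h': "h' \<in> LLL" "h' \<noteq> g" "u \<in> ends h'" using leaf_other[OF lL gL(1)] l by blast
      have "h' \<noteq> e" using notin_e[OF uP False] h'(3) by blast
      then have "h' \<in> Z1" using Y1P[OF h'(1) _ h'(3) uP] by blast
      then show ?thesis using l h' by blast
    qed
  qed
  have hE: "h \<in> E" using hF by blast
  have Z1h: "Z1 \<subseteq> {h}"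
  proof (rule LE[OF cY Y1E])
    show "{h} \<subseteq> Y1" using hY by blast
    show "{h} \<noteq> {}" by blast
    show "dlt ends Y1 \<le> dlt ends {h}" using dY dlt_single_bounds[OF hE] by linarith
    show "Z1 \<subseteq> Y1" using Z1_def by blast
    show "\<forall>u g. is_leaf ends (verts ends Z1) Z1 u g \<longrightarrow> u \<in> verts ends {h}" by (rule cond)
  qed
  have "dlt ends {h} \<le> dlt ends Y1" using dlt_le_conn[OF cY Y1E] hY by blast
  then have ch: "card (ends h) = 2" using dY dlt_single[OF hE] ends_card[OF hE] by linarith
  obtain x where x: "x \<in> ends h" "x \<noteq> wa"
  proof -
    have "\<not> ends h \<subseteq> {wa}"
    proof
      assume "ends h \<subseteq> {wa}"
      then have "card (ends h) \<le> card {wa}" by (intro card_mono) auto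
      then show False using ch by simp
    qed
    then show ?thesis using that by blast
  qed
  have xP: "x \<in> Pa" using x hP by blast
  obtain h'' where h'': "h'' \<in> LLL" "h'' \<noteq> h" "x \<in> ends h''" using leaf_other[OF lL h(1) x(1) ch] by blast
  have "h'' \<noteq> e" using notin_e[OF xP x(2)] h'' by blast
  then have "h'' \<in> Z1" using Y1P[OF h''(1) _ h''(3) xP] by blast
  then show False using Z1h h'' by blast
qed
qed

lemma tree_side:
  assumes ne: "Q1 \<noteq> Q2" and eL: "e \<in> LLL"
  shows "Delta_comp ends FF Q1 \<noteq> -1" "Delta_comp ends FF Q2 \<noteq> -1"
  using tree_side_gen[of w1 w2] tree_side_gen[of w2 w1] ne eL by auto

lemma not_core_split:
  assumes ne: "Q1 \<noteq> Q2" and a1: "Delta_comp ends E AA \<ge> 1" and eL: "e \<notin> LLL"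
  shows "Delta_comp ends FF Q1 = -1 \<or> Delta_comp ends FF Q2 = -1"
proof (rule ccontr)
  assume "\<not> (Delta_comp ends FF Q1 = -1 \<or> Delta_comp ends FF Q2 = -1)"
  then have d: "Delta_comp ends FF Q1 \<ge> 0" "Delta_comp ends FF Q2 \<ge> 0"
    using Delta_comp_ge[OF FE' Pc'(1)] Delta_comp_ge[OF FE' Pc'(2)] by linarith+
  define Y1 where "Y1 = comp_edges ends FF Q1"
  define Y2 where "Y2 = comp_edges ends FF Q2"
  define L1 where "L1 = LLL \<inter> Y1"
  define L2 where "L2 = LLL \<inter> Y2"
  have LY: "LLL \<subseteq> Y1 \<union> Y2" using LL_sub[of EAA] eL esplit' Y1_def Y2_def by blast
  have Lsplit: "LLL = L1 \<union> L2" using LY L1_def L2_def by blast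
  have YE: "Y1 \<subseteq> E" "Y2 \<subseteq> E" using comp_edges_sub Y1_def Y2_def by blast+
  have LiE: "L1 \<subseteq> E" "L2 \<subseteq> E" using YE L1_def L2_def by blast+
  have dj: "Q1 \<inter> Q2 = {}" using P_disj[OF ne] .
  have vdj: "verts ends L1 \<inter> verts ends L2 = {}"
  proof -
    have "verts ends L1 \<subseteq> Q1" using verts_comp_edges[of FF Q1] V_mono[of L1 Y1] L1_def Y1_def by blast
    moreover have "verts ends L2 \<subseteq> Q2" using verts_comp_edges[of FF Q2] V_mono[of L2 Y2] L2_def Y2_def by blast
    ultimately show ?thesis using dj by blast
  qed
  have dL: "dlt ends LLL = dlt ends L1 + dlt ends L2" using dlt_add[OF LiE vdj] Lsplit by simp
  have bnd: "dlt ends Li \<le> Delta_comp ends FF P"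
    if P: "P \<in> comps ends Vt FF" and Li: "Li = LLL \<inter> comp_edges ends FF P" and dP: "Delta_comp ends FF P \<ge> 0"
    for P Li
  proof (cases "Li = {}")
    case True then show ?thesis using dP by simp
  next
    case False
    have Yne: "comp_edges ends FF P \<noteq> {}" using False Li by blast
    have "dlt ends Li \<le> dlt ends (comp_edges ends FF P)"
      using dlt_le_conn[OF conn_comp[OF FE' P] _ _ False] comp_edges_sub[of FF P] Li by blast
    then show ?thesis using Delta_comp_dlt[OF comp_ne_verts[OF FE' P Yne]] by simp
  qed
  have b1: "dlt ends L1 \<le> Delta_comp ends FF Q1" using bnd[OF Pc'(1) _ d(1)] L1_def Y1_def by blast
  have b2: "dlt ends L2 \<le> Delta_comp ends FF Q2" using bnd[OF Pc'(2) _ d(2)] L2_def Y2_def by blast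
  have "dlt ends LLL = Delta_comp ends E AA" using LL_dlt(1)[OF Acomp' a1] .
  then show False using dL b1 b2 Delta_two[OF ne] by linarith
qed

lemma conn_core:
  assumes eq: "Q1 = Q2" and a1: "Delta_comp ends E AA \<ge> 1"
  shows "e \<in> LLL"
proof (rule ccontr)
  assume eL: "e \<notin> LLL"
  define Y where "Y = comp_edges ends FF Q1"
  have YE: "Y \<subseteq> E" using comp_edges_sub Y_def by blast
  have LY: "LLL \<subseteq> Y" using Delta_conn(2)[OF eq] LL_sub[of EAA] eL Y_def by blast
  have Lne: "LLL \<noteq> {}" using LL_dlt(2)[OF Acomp' a1] .
  have Yne: "Y \<noteq> {}" using LY Lne by blast
  have "dlt ends LLL \<le> dlt ends Y" using dlt_le_conn[OF conn_comp[OF FE' Pc'(1)] _ _ Lne] YE LY Y_def by blast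
  moreover have "dlt ends Y = Delta_comp ends FF Q1"
    using Delta_comp_dlt[OF comp_ne_verts[OF FE' Pc'(1)]] Yne Y_def by simp
  moreover have "dlt ends LLL = Delta_comp ends E AA" using LL_dlt(1)[OF Acomp' a1] .
  ultimately show False using Delta_conn(1)[OF eq] by linarith
qed

lemma core_iff: "e \<in> core_edges E ends \<longleftrightarrow> Delta_comp ends E AA \<ge> 1 \<and> e \<in> LLL"
proof
  assume "e \<in> core_edges E ends"
  then obtain C where C: "C \<in> comps ends Vt E" "Delta_comp ends E C \<ge> 1" "e \<in> LL ends (comp_edges ends E C)"
    using core_char by blast
  have "e \<in> comp_edges ends E C" using C(3) LL_sub by blast
  then have "w1 \<in> C" using ew unfolding comp_edges_def by blast
  then have "C = AA" using comps_disj[OF C(1) Acomp'] comp_self[OF wV'(1)] by blast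
  then show "Delta_comp ends E AA \<ge> 1 \<and> e \<in> LLL" using C by simp
next
  assume "Delta_comp ends E AA \<ge> 1 \<and> e \<in> LLL"
  then show "e \<in> core_edges E ends" using core_char Acomp' by blast
qed

definition "TE = {C \<in> comps ends Vt E. Delta_comp ends E C = -1}"
definition "NT = {P \<in> {Q1, Q2}. Delta_comp ends FF P = -1}"

lemma TF_eq: "{C \<in> comps ends Vt FF. Delta_comp ends FF C = -1} = (TE - {AA}) \<union> NT"
proof -
  have oe: "\<And>C. C \<in> comps ends Vt E - {AA} \<Longrightarrow> Delta_comp ends FF C = Delta_comp ends E C"
  proof -
    fix C assume "C \<in> comps ends Vt E - {AA}"
    then have "comp_edges ends FF C = comp_edges ends E C" using other_edges[OF eE ew] by blast
    then show "Delta_comp ends FF C = Delta_comp ends E C" unfolding Delta_comp_def by simp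
  qed
  show ?thesis
  proof (intro set_eqI iffI)
    fix C assume C: "C \<in> {C \<in> comps ends Vt FF. Delta_comp ends FF C = -1}"
    then have C1: "C \<in> (comps ends Vt E - {AA}) \<union> {Q1, Q2}" "Delta_comp ends FF C = -1"
      using compsF' by blast+
    show "C \<in> (TE - {AA}) \<union> NT"
    proof (cases "C \<in> {Q1, Q2}")
      case True then show ?thesis using C1(2) unfolding NT_def by blast
    next
      case False
      then have "C \<in> comps ends Vt E - {AA}" using C1 by blast
      then show ?thesis using oe C1(2) unfolding TE_def by force
    qed
  next
    fix C assume C: "C \<in> (TE - {AA}) \<union> NT"
    show "C \<in> {C \<in> comps ends Vt FF. Delta_comp ends FF C = -1}"
    proof (cases "C \<in> NT")
      case True then show ?thesis unfolding NT_def using Pc' by blast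
    next
      case False
      then have "C \<in> comps ends Vt E - {AA}" "Delta_comp ends E C = -1" using C unfolding TE_def by blast+
      then show ?thesis using oe compsF' by force
    qed
  qed
qed

lemma Y_iff: "e \<in> Yset E ends \<longleftrightarrow> card NT > (if Delta_comp ends E AA = -1 then 1 else 0)"
proof -
  have fT: "finite TE" unfolding TE_def using comps_fin by simp
  have fN: "finite NT" unfolding NT_def by simp
  have dj: "(TE - {AA}) \<inter> NT = {}" unfolding TE_def NT_def using Pnot' by blast
  have cTF: "tree_count ends Vt FF = card (TE - {AA}) + card NT"
    unfolding tree_count_def TF_eq using card_Un_disjoint[OF _ fN dj] fT by simp
  have cTE: "tree_count ends Vt E = card (TE - {AA}) + (if Delta_comp ends E AA = -1 then 1 else 0)"
  proof (cases "Delta_comp ends E AA = -1")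
    case True
    then have "AA \<in> TE" unfolding TE_def using Acomp' by blast
    then have "card TE = card (TE - {AA}) + 1" using fT
      by (metis Suc_eq_plus1 card.remove)
    then show ?thesis using True unfolding tree_count_def TE_def by simp
  next
    case False
    then have "AA \<notin> TE" unfolding TE_def by blast
    then show ?thesis using False unfolding tree_count_def TE_def by simp
  qed
  show ?thesis unfolding Yset_def using cTF cTE eE by auto
qed

lemma Y_core: "e \<in> Yset E ends \<longleftrightarrow> e \<notin> core_edges E ends"
proof -
  have d1g: "Delta_comp ends FF Q1 \<ge> -1" using Delta_comp_ge[OF FE' Pc'(1)] .
  have d2g: "Delta_comp ends FF Q2 \<ge> -1" using Delta_comp_ge[OF FE' Pc'(2)] .
  show ?thesis
  proof (cases "Q1 = Q2")
    case True
    have NTc: "NT = (if Delta_comp ends FF Q1 = -1 then {Q1} else {})"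
    proof (cases "Delta_comp ends FF Q1 = -1")
      case T: True
      show ?thesis unfolding NT_def using True T by (intro set_eqI) auto
    next
      case T: False
      show ?thesis unfolding NT_def using True T by (intro set_eqI) auto
    qed
    have dd: "Delta_comp ends FF Q1 = Delta_comp ends E AA - 1" using Delta_conn(1)[OF True] .
    show ?thesis
    proof (cases "Delta_comp ends E AA \<ge> 1")
      case True2: True
      have "e \<in> core_edges E ends" using core_iff conn_core[OF True True2] True2 by blast
      moreover have "\<not> e \<in> Yset E ends" using Y_iff NTc dd True2 by simp
      ultimately show ?thesis by blast
    next
      case False
      then have a0: "Delta_comp ends E AA = 0" using dd d1g by linarith
      have "e \<notin> core_edges E ends" using core_iff a0 by simp
      moreover have "e \<in> Yset E ends" using Y_iff NTc dd a0 by simp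
      ultimately show ?thesis by blast
    qed
  next
    case False
    have NTc: "card NT = (if Delta_comp ends FF Q1 = -1 then 1 else 0) + (if Delta_comp ends FF Q2 = -1 then 1 else 0)"
    proof -
      have "NT = (if Delta_comp ends FF Q1 = -1 then {Q1} else {}) \<union> (if Delta_comp ends FF Q2 = -1 then {Q2} else {})"
        unfolding NT_def by auto
      moreover have "(if Delta_comp ends FF Q1 = -1 then {Q1} else {}) \<inter> (if Delta_comp ends FF Q2 = -1 then {Q2} else {}) = {}"
        using False by auto
      ultimately show ?thesis by (simp add: card_Un_disjoint)
    qed
    have dd: "Delta_comp ends FF Q1 + Delta_comp ends FF Q2 = Delta_comp ends E AA - 1" using Delta_two[OF False] .
    show ?thesis
    proof (cases "Delta_comp ends E AA \<ge> 1")
      case True2: True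
      show ?thesis
      proof (cases "e \<in> LLL")
        case True
        have "Delta_comp ends FF Q1 \<noteq> -1" "Delta_comp ends FF Q2 \<noteq> -1" using tree_side[OF False True] by auto
        then have "\<not> e \<in> Yset E ends" using Y_iff NTc True2 by simp
        moreover have "e \<in> core_edges E ends" using core_iff True True2 by blast
        ultimately show ?thesis by blast
      next
        case eL: False
        have "Delta_comp ends FF Q1 = -1 \<or> Delta_comp ends FF Q2 = -1" using not_core_split[OF False True2 eL] .
        then have "e \<in> Yset E ends" using Y_iff NTc True2 by auto
        moreover have "e \<notin> core_edges E ends" using core_iff eL by blast
        ultimately show ?thesis by blast
      qed
    next
      case a: False
      have "e \<notin> core_edges E ends" using core_iff a by simp
      moreover have "e \<in> Yset E ends"
      proof (cases "Delta_comp ends E AA = -1")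
        case True
        then have "Delta_comp ends FF Q1 = -1" "Delta_comp ends FF Q2 = -1" using dd d1g d2g by linarith+
        then show ?thesis using Y_iff NTc True by simp
      next
        case False
        then have "Delta_comp ends FF Q1 = -1 \<or> Delta_comp ends FF Q2 = -1" using dd d1g d2g a by linarith
        then show ?thesis using Y_iff NTc False by auto
      qed
      ultimately show ?thesis by blast
    qed
  qed
qed

end

lemma ends_two: "e \<in> E \<Longrightarrow> \<exists>w1 w2. ends e = {w1, w2}"
proof -
  assume eE: "e \<in> E"
  have c: "card (ends e) = 1 \<or> card (ends e) = 2" using ends_card[OF eE] by linarith
  then show ?thesis
  proof
    assume "card (ends e) = 1"
    then obtain x where "ends e = {x}" using card_1_singletonE by blast
    then have "ends e = {x, x}" by simp
    then show ?thesis by blast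
  next
    assume "card (ends e) = 2"
    then obtain x y where "ends e = {x, y}" by (meson card_2_iff)
    then show ?thesis by blast
  qed
qed

lemma Yset_eq: "E - core_edges E ends = Yset E ends"
proof
  show "E - core_edges E ends \<subseteq> Yset E ends"
  proof
    fix e assume e: "e \<in> E - core_edges E ends"
    then have eE: "e \<in> E" by blast
    obtain w1 w2 where w: "ends e = {w1, w2}" using ends_two[OF eE] by blast
    have "e \<notin> core_edges E ends" using e by blast
    then show "e \<in> Yset E ends" using Y_core[OF eE w] by blast
  qed
  show "Yset E ends \<subseteq> E - core_edges E ends"
  proof
    fix e assume e: "e \<in> Yset E ends"
    then have eE: "e \<in> E" unfolding Yset_def by blast
    obtain w1 w2 where w: "ends e = {w1, w2}" using ends_two[OF eE] by blast
    have "e \<notin> core_edges E ends" using Y_core[OF eE w] e by blast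
    then show "e \<in> E - core_edges E ends" using eE by blast
  qed
qed

end

theorem mainTheorem12:
  fixes E :: "'e set" and ends :: "'e \<Rightarrow> 'v set" and k :: nat
  assumes "multigraph E ends"
    and "k \<ge> 1"
    and "nontrivial_matroid E (Mk_circuits E ends k)"
  shows "coloops E (Mk_circuits E ends k) = E - core_edges E ends
         \<and> E - core_edges E ends = Yset E ends"
proof -
  interpret G E ends by (rule G.intro) (rule assms(1))
  have "Mk_circuits E ends k \<noteq> {}" using assms(3) unfolding nontrivial_matroid_def by blast
  then show ?thesis using coloops_eq[OF assms(2)] Yset_eq by blast
qed

end
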